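(* Let $\psi$ be an admissible modulus and $\varphi$ an admissible order function with $I_\psi\subset(0,1)$ and $I_{\varphi\psi}\subset(0,1)\cup(1,2)\cup(2,3)$, and let $u\in C^{\varphi\psi}(\mathbb{R}^d)$, $f\in C^\psi(\mathbb{R}^d)$. Suppose that for each $\varepsilon>0$ there exist $r>0$ and $c_1\ge1$ (depending on $\varepsilon$) such that $$\|u\eta_{r,x_0}\|_{C^{\varphi\psi}}\le c_1\big(\|f\|_{C^\psi}+\|u\|_{C^0}\big)+\varepsilon\|u\|_{C^{\varphi\psi}}\quad\text{for all }x_0\in\mathbb{R}^d.$$ Then there exists a constant $C$ such that $\|u\|_{C^{\varphi\psi}}\le C(\|f\|_{C^\psi}+\|u\|_{C^0})$.
   Context: Almost increasing/decreasing: $g:(0,1]\to(0,\infty)$ is almost increasing if $c\,g(r)\le g(R)$ for some $c\in(0,1]$ and all $0<r\le R\le1$, almost decreasing if $g(R)\le Cg(r)$ for some $C\ge1$ and all $0<r\le R\le1$. $M_g=\inf\{\alpha: g(r)/r^\alpha\text{ almost decreasing}\}$, $m_g=\sup\{\alpha: g(r)/r^\alpha\text{ almost increasing}\}$, $I_g=[m_g,M_g]$. An admissible modulus is $\psi:(0,1]\to(0,\infty)$, $\psi(1)=1$, $\psi(r)\to0$ as $r\to0+$. An admissible order function is a smooth $\varphi:(0,\infty)\to(0,\infty)$, $\varphi(1)=1$, such that $\phi(r)=\varphi(r^{-1/2})^{-1}$ is a Bernstein function ($\phi\ge0$, $C^\infty$, $(-1)^n\phi^{(n)}\le0$ for $n\ge1$)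 and $a_1\lambda^{2\delta_1}\varphi(r)\le\varphi(\lambda r)\le a_2\lambda^{2\delta_2}\varphi(r)$ for all $\lambda\ge1,r>0$, some $0<\delta_1\le\delta_2<1$, $a_1\in(0,1]$, $a_2\ge1$. Indices of $\varphi$ refer to its restriction to $(0,1]$; $\varphi\psi$ is the product on $(0,1]$. $\|f\|_{C^0}=\sup|f|$, $\|D^jf\|_{C^0}=\max_{|\gamma|=j}\|D^\gamma f\|_{C^0}$; $[f]_{C^{-j;g}}=\sup_x\sup_{0<|h|\le1}\frac{|f(x+h)-f(x)|}{g(|h|)|h|^{-j}}$. If $m_g\in(k,k+1]$, $k\in\mathbb{N}_0$, $C^g(\mathbb{R}^d)$ is the set of continuous $f$ with $D^\gamma f$ bounded continuous for $|\gamma|\le k$ and $[D^\gamma f]_{C^{-k;g}}<\infty$ for $|\gamma|=k$, norm $\|f\|_{C^g}=\sum_{j\le k}\|D^jf\|_{C^0}+\max_{|\gamma|=k}[D^\gamma f]_{C^{-k;g}}$. Cut-off: $\bar\eta\in C^\infty_c(\mathbb{R}^d)$ is a fixed function with values in $[0,1]$, equal to $1$ on $B(0,1)$ and $0$ outside $B(0,2)$; $\eta_{r,x_0}(x)=\bar\eta((x-x_0)/r)$. *)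

theory Defs
  imports "HOL-Analysis.Analysis"
begin

definition almost_increasing :: "(real \<Rightarrow> real) \<Rightarrow> bool" where
  "almost_increasing g \<longleftrightarrow>
     (\<exists>c. 0 < c \<and> c \<le> 1 \<and> (\<forall>r R. 0 < r \<and> r \<le> R \<and> R \<le> 1 \<longrightarrow> c * g r \<le> g R))"

definition almost_decreasing :: "(real \<Rightarrow> real) \<Rightarrow> bool" where
  "almost_decreasing g \<longleftrightarrow>
     (\<exists>C. 1 \<le> C \<and> (\<forall>r R. 0 < r \<and> r \<le> R \<and> R \<le> 1 \<longrightarrow> g R \<le> C * g r))"

text \<open>Indices are taken in the extended reals so that inf/sup of empty or
unbounded sets have their natural values (+/- infinity).\<close>

definition upper_index :: "(real \<Rightarrow> real) \<Rightarrow> ereal" where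
  "upper_index g = Inf {ereal \<alpha> | \<alpha>. almost_decreasing (\<lambda>r. g r / r powr \<alpha>)}"

definition lower_index :: "(real \<Rightarrow> real) \<Rightarrow> ereal" where
  "lower_index g = Sup {ereal \<alpha> | \<alpha>. almost_increasing (\<lambda>r. g r / r powr \<alpha>)}"

definition index_interval :: "(real \<Rightarrow> real) \<Rightarrow> real set" where
  "index_interval g = {x. lower_index g \<le> ereal x \<and> ereal x \<le> upper_index g}"

definition admissible_modulus :: "(real \<Rightarrow> real) \<Rightarrow> bool" where
  "admissible_modulus \<psi> \<longleftrightarrow>
     (\<forall>r. 0 < r \<and> r \<le> 1 \<longrightarrow> 0 < \<psi> r) \<and> \<psi> 1 = 1 \<and> (\<psi> \<longlongrightarrow> 0) (at_right 0)"

definition smooth_pos :: "(real \<Rightarrow> real) \<Rightarrow> bool" where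
  "smooth_pos f \<longleftrightarrow> (\<forall>n x. 0 < x \<longrightarrow> ((deriv ^^ n) f) differentiable (at x))"

definition bernstein :: "(real \<Rightarrow> real) \<Rightarrow> bool" where
  "bernstein \<phi> \<longleftrightarrow> (\<forall>x>0. 0 \<le> \<phi> x) \<and> smooth_pos \<phi> \<and>
     (\<forall>n x. 1 \<le> n \<and> 0 < x \<longrightarrow> (-1) ^ n * (deriv ^^ n) \<phi> x \<le> 0)"

definition admissible_order_function :: "(real \<Rightarrow> real) \<Rightarrow> bool" where
  "admissible_order_function \<phi> \<longleftrightarrow>
     smooth_pos \<phi> \<and> (\<forall>r>0. 0 < \<phi> r) \<and> \<phi> 1 = 1 \<and>
     bernstein (\<lambda>r. inverse (\<phi> (r powr (-1/2)))) \<and>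
     (\<exists>\<delta>1 \<delta>2 a1 a2. 0 < \<delta>1 \<and> \<delta>1 \<le> \<delta>2 \<and> \<delta>2 < 1 \<and> 0 < a1 \<and> a1 \<le> 1 \<and> 1 \<le> a2 \<and>
        (\<forall>s r. 1 \<le> s \<and> 0 < r \<longrightarrow>
            a1 * s powr (2*\<delta>1) * \<phi> r \<le> \<phi> (s * r) \<and>
            \<phi> (s * r) \<le> a2 * s powr (2*\<delta>2) * \<phi> r))"

definition pd :: "'a::euclidean_space \<Rightarrow> ('a \<Rightarrow> real) \<Rightarrow> 'a \<Rightarrow> real" where
  "pd v f x = deriv (\<lambda>t. f (x + t *\<^sub>R v)) 0"

text \<open>D^gamma for a multi-index given as a list of basis vectors (|gamma| = length).\<close>
fun Dl :: "'a::euclidean_space list \<Rightarrow> ('a \<Rightarrow> real) \<Rightarrow> 'a \<Rightarrow> real" where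
  "Dl [] f = f"
| "Dl (v # vs) f = pd v (Dl vs f)"

definition multi_indices :: "nat \<Rightarrow> 'a::euclidean_space list set" where
  "multi_indices j = {\<gamma>. set \<gamma> \<subseteq> Basis \<and> length \<gamma> = j}"

definition sup_norm :: "('a \<Rightarrow> real) \<Rightarrow> real" where
  "sup_norm f = (SUP x. \<bar>f x\<bar>)"

definition Dnorm :: "nat \<Rightarrow> ('a::euclidean_space \<Rightarrow> real) \<Rightarrow> real" where
  "Dnorm j f = (SUP \<gamma>\<in>multi_indices j. sup_norm (Dl \<gamma> f))"

definition holder_quotients :: "nat \<Rightarrow> (real \<Rightarrow> real) \<Rightarrow> ('a::real_normed_vector \<Rightarrow> real) \<Rightarrow> real set" where
  "holder_quotients j g f =
     {\<bar>f (x + h) - f x\<bar> / (g (norm h) * norm h powr (- real j)) | x h. 0 < norm h \<and> norm h \<le> 1}"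

definition holder_semi :: "nat \<Rightarrow> (real \<Rightarrow> real) \<Rightarrow> ('a::real_normed_vector \<Rightarrow> real) \<Rightarrow> real" where
  "holder_semi j g f = Sup (holder_quotients j g f)"

definition holder_order :: "(real \<Rightarrow> real) \<Rightarrow> nat" where
  "holder_order g = (THE k::nat. ereal (real k) < lower_index g \<and> lower_index g \<le> ereal (real k + 1))"

definition Cg :: "(real \<Rightarrow> real) \<Rightarrow> ('a::euclidean_space \<Rightarrow> real) set" where
  "Cg g = {f. let k = holder_order g in
      continuous_on UNIV f \<and>
      (\<forall>\<gamma> v x. set \<gamma> \<subseteq> Basis \<and> length \<gamma> < k \<and> v \<in> Basis \<longrightarrow>
          (\<lambda>t. Dl \<gamma> f (x + t *\<^sub>R v)) differentiable (at 0)) \<and>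
      (\<forall>\<gamma>. set \<gamma> \<subseteq> Basis \<and> length \<gamma> \<le> k \<longrightarrow>
          continuous_on UNIV (Dl \<gamma> f) \<and> bounded (range (Dl \<gamma> f))) \<and>
      (\<forall>\<gamma>\<in>multi_indices k. bdd_above (holder_quotients k g (Dl \<gamma> f)))}"

definition Cnorm :: "(real \<Rightarrow> real) \<Rightarrow> ('a::euclidean_space \<Rightarrow> real) \<Rightarrow> real" where
  "Cnorm g f = (let k = holder_order g in
      (\<Sum>j\<le>k. Dnorm j f) + (SUP \<gamma>\<in>multi_indices k. holder_semi k g (Dl \<gamma> f)))"

definition smooth_fun :: "('a::euclidean_space \<Rightarrow> real) \<Rightarrow> bool" where
  "smooth_fun f \<longleftrightarrow> (\<forall>\<gamma>. set \<gamma> \<subseteq> Basis \<longrightarrow> continuous_on UNIV (Dl \<gamma> f) \<and>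
      (\<forall>v x. v \<in> Basis \<longrightarrow> (\<lambda>t. Dl \<gamma> f (x + t *\<^sub>R v)) differentiable (at 0)))"

definition cutoff :: "('a::euclidean_space \<Rightarrow> real) \<Rightarrow> bool" where
  "cutoff \<eta> \<longleftrightarrow> smooth_fun \<eta> \<and> (\<forall>x. 0 \<le> \<eta> x \<and> \<eta> x \<le> 1) \<and>
     (\<forall>x\<in>ball 0 1. \<eta> x = 1) \<and> (\<forall>x. x \<notin> ball 0 2 \<longrightarrow> \<eta> x = 0)"

definition eta_rx :: "('a::euclidean_space \<Rightarrow> real) \<Rightarrow> real \<Rightarrow> 'a \<Rightarrow> 'a \<Rightarrow> real" where
  "eta_rx \<eta> r x0 x = \<eta> ((1 / r) *\<^sub>R (x - x0))"

end

theory Submission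
  imports Defs
begin

lemma Dl_local:
  fixes F G :: "'a::euclidean_space \<Rightarrow> real"
  assumes "open U" "\<forall>x\<in>U. F x = G x"
  shows "\<forall>x\<in>U. Dl \<gamma> F x = Dl \<gamma> G x"
proof (induction \<gamma>)
  case Nil
  then show ?case using assms by simp
next
  case (Cons v vs)
  show ?case
  proof
    fix x assume x: "x \<in> U"
    have "eventually (\<lambda>t. x + t *\<^sub>R v \<in> U) (nhds (0::real))"
    proof -
      have "open ((\<lambda>t::real. x + t *\<^sub>R v) -` U)"
        using assms(1) by (intro continuous_open_vimage continuous_intros)
      then have "open {t::real. x + t *\<^sub>R v \<in> U}" by (simp add: vimage_def)
      then show ?thesis unfolding eventually_nhds using x by (intro exI[of _ "{t::real. x + t *\<^sub>R v \<in> U}"]) auto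
    qed
    then have "eventually (\<lambda>t. Dl vs F (x + t *\<^sub>R v) = Dl vs G (x + t *\<^sub>R v)) (nhds (0::real))"
      by eventually_elim (use Cons in auto)
    then show "Dl (v # vs) F x = Dl (v # vs) G x"
      by (simp add: pd_def deriv_cong_ev)
  qed
qed

lemma Dl_zero: "Dl \<gamma> (\<lambda>x::'a::euclidean_space. 0::real) = (\<lambda>x. 0)"
  by (induction \<gamma>) (auto simp: pd_def fun_eq_iff)

lemma line_deriv:
  fixes F :: "'a::euclidean_space \<Rightarrow> real"
  assumes "\<forall>x. (\<lambda>t. F (x + t *\<^sub>R v)) differentiable (at 0)"
  shows "((\<lambda>s. F (x + s *\<^sub>R v)) has_real_derivative pd v F (x + s *\<^sub>R v)) (at s)"
proof -
  have "((\<lambda>t. F ((x + s *\<^sub>R v) + t *\<^sub>R v)) has_real_derivative pd v F (x + s *\<^sub>R v)) (at 0)"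
    using assms unfolding pd_def by (simp add: DERIV_deriv_iff_real_differentiable)
  then have "((\<lambda>t. F (x + (t + s) *\<^sub>R v)) has_real_derivative pd v F (x + s *\<^sub>R v)) (at 0)"
    by (simp add: scaleR_add_left add.assoc add.commute add.left_commute)
  then show ?thesis using DERIV_shift[of "\<lambda>s. F (x + s *\<^sub>R v)" _ 0 s] by simp
qed

lemma line_lip:
  fixes F :: "'a::euclidean_space \<Rightarrow> real"
  assumes "\<forall>x. (\<lambda>t. F (x + t *\<^sub>R v)) differentiable (at 0)"
    and "\<forall>x. \<bar>pd v F x\<bar> \<le> M"
  shows "\<bar>F (x + t *\<^sub>R v) - F x\<bar> \<le> M * \<bar>t\<bar>"
proof -
  have D: "\<And>s. ((\<lambda>s. F (x + s *\<^sub>R v)) has_real_derivative pd v F (x + s *\<^sub>R v)) (at s)"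
    using line_deriv[OF assms(1)] by blast
  consider "t = 0" | "0 < t" | "t < 0" by linarith
  then show ?thesis
  proof cases
    case 1 then show ?thesis by simp
  next
    case 2
    from MVT2[OF 2, of "\<lambda>s. F (x + s *\<^sub>R v)" "\<lambda>s. pd v F (x + s *\<^sub>R v)"] D
    obtain z where "F (x + t *\<^sub>R v) - F (x + 0 *\<^sub>R v) = (t - 0) * pd v F (x + z *\<^sub>R v)" by blast
    then have "\<bar>F (x + t *\<^sub>R v) - F x\<bar> = \<bar>t\<bar> * \<bar>pd v F (x + z *\<^sub>R v)\<bar>" by (simp add: abs_mult)
    also have "\<dots> \<le> \<bar>t\<bar> * M" using assms(2) by (intro mult_left_mono) auto
    finally show ?thesis by (simp add: mult.commute)
  next
    case 3
    from MVT2[OF 3, of "\<lambda>s. F (x + s *\<^sub>R v)" "\<lambda>s. pd v F (x + s *\<^sub>R v)"] D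
    obtain z where "F (x + 0 *\<^sub>R v) - F (x + t *\<^sub>R v) = (0 - t) * pd v F (x + z *\<^sub>R v)" by blast
    then have "\<bar>F (x + t *\<^sub>R v) - F x\<bar> = \<bar>t\<bar> * \<bar>pd v F (x + z *\<^sub>R v)\<bar>" by (simp add: abs_mult abs_minus_commute)
    also have "\<dots> \<le> \<bar>t\<bar> * M" using assms(2) by (intro mult_left_mono) auto
    finally show ?thesis by (simp add: mult.commute)
  qed
qed

lemma lip_sum_basis:
  fixes F :: "'a::euclidean_space \<Rightarrow> real"
  assumes "\<forall>v\<in>Basis. \<forall>x. (\<lambda>t. F (x + t *\<^sub>R v)) differentiable (at 0)"
    and "\<forall>v\<in>Basis. \<forall>x. \<bar>pd v F x\<bar> \<le> M"
    and "finite B" "B \<subseteq> Basis"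
  shows "\<forall>x. \<bar>F (x + (\<Sum>b\<in>B. c b *\<^sub>R b)) - F x\<bar> \<le> M * (\<Sum>b\<in>B. \<bar>c b\<bar>)"
  using assms(3,4)
proof (induction B rule: finite_induct)
  case empty then show ?case by simp
next
  case (insert b B)
  show ?case
  proof
    fix x
    have bB: "b \<in> Basis" using insert by auto
    have e: "x + (\<Sum>b\<in>insert b B. c b *\<^sub>R b) = (x + (\<Sum>b\<in>B. c b *\<^sub>R b)) + c b *\<^sub>R b"
      using insert(1,2) by (simp add: add_ac)
    have "\<bar>F (x + (\<Sum>b\<in>insert b B. c b *\<^sub>R b)) - F x\<bar>
        = \<bar>(F ((x + (\<Sum>b\<in>B. c b *\<^sub>R b)) + c b *\<^sub>R b) - F (x + (\<Sum>b\<in>B. c b *\<^sub>R b)))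
           + (F (x + (\<Sum>b\<in>B. c b *\<^sub>R b)) - F x)\<bar>"
      unfolding e by simp
    also have "\<dots> \<le> M * \<bar>c b\<bar> + M * (\<Sum>b\<in>B. \<bar>c b\<bar>)"
    proof (rule order.trans[OF abs_triangle_ineq add_mono])
      show "\<bar>F (x + (\<Sum>b\<in>B. c b *\<^sub>R b) + c b *\<^sub>R b) - F (x + (\<Sum>b\<in>B. c b *\<^sub>R b))\<bar> \<le> M * \<bar>c b\<bar>"
        using line_lip[of F b M] assms(1,2) bB by blast
      show "\<bar>F (x + (\<Sum>b\<in>B. c b *\<^sub>R b)) - F x\<bar> \<le> M * (\<Sum>b\<in>B. \<bar>c b\<bar>)"
        using insert(3,4) by auto
    qed
    also have "\<dots> = M * (\<Sum>b\<in>insert b B. \<bar>c b\<bar>)"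
      using insert(1,2) by (simp add: distrib_left)
    finally show "\<bar>F (x + (\<Sum>b\<in>insert b B. c b *\<^sub>R b)) - F x\<bar> \<le> M * (\<Sum>b\<in>insert b B. \<bar>c b\<bar>)" .
  qed
qed

lemma lip_basis:
  fixes F :: "'a::euclidean_space \<Rightarrow> real"
  assumes "\<forall>v\<in>Basis. \<forall>x. (\<lambda>t. F (x + t *\<^sub>R v)) differentiable (at 0)"
    and "\<forall>v\<in>Basis. \<forall>x. \<bar>pd v F x\<bar> \<le> M"
  shows "\<bar>F (x + h) - F x\<bar> \<le> M * DIM('a) * norm h"
proof -
  obtain b0 :: 'a where b0: "b0 \<in> Basis" using nonempty_Basis by blast
  have M: "0 \<le> M" using assms(2) b0 abs_ge_zero order.trans by blast
  have "\<bar>F (x + (\<Sum>b\<in>Basis. (h \<bullet> b) *\<^sub>R b)) - F x\<bar> \<le> M * (\<Sum>b\<in>Basis. \<bar>h \<bullet> b\<bar>)"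
    using lip_sum_basis[OF assms finite_Basis order_refl, of "\<lambda>b. h \<bullet> b"] by blast
  also have "\<dots> \<le> M * (\<Sum>b\<in>(Basis::'a set). norm h)"
    using M by (intro mult_left_mono sum_mono) (auto simp: Basis_le_norm)
  also have "\<dots> = M * DIM('a) * norm h" by simp
  finally have "\<bar>F (x + (\<Sum>b\<in>Basis. (h \<bullet> b) *\<^sub>R b)) - F x\<bar> \<le> M * DIM('a) * norm h" .
  then show ?thesis by (simp only: euclidean_representation)
qed

lemma eta_line_raw:
  fixes \<eta> :: "'a::euclidean_space \<Rightarrow> real"
  assumes sm: "smooth_fun \<eta>" and r: "0 < r" and g: "set \<gamma> \<subseteq> Basis" and v: "v \<in> Basis"
    and form: "\<forall>x. Dl \<gamma> (eta_rx \<eta> r x0) x = (1/r)^length \<gamma> * Dl \<gamma> \<eta> ((1/r) *\<^sub>R (x - x0))"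
  shows "((\<lambda>t. Dl \<gamma> (eta_rx \<eta> r x0) (x + t *\<^sub>R v)) has_real_derivative
           (1/r)^(Suc (length \<gamma>)) * Dl (v # \<gamma>) \<eta> ((1/r) *\<^sub>R (x - x0))) (at 0)"
proof -
  define y where "y = (1/r) *\<^sub>R (x - x0)"
  define G where "G s = Dl \<gamma> \<eta> (y + s *\<^sub>R v)" for s
  have "G differentiable (at 0)" using sm g v unfolding smooth_fun_def G_def by blast
  then have dG: "(G has_real_derivative Dl (v # \<gamma>) \<eta> y) (at 0)"
    using DERIV_deriv_iff_real_differentiable[of G 0] unfolding G_def[abs_def] by (simp add: pd_def)
  have dq: "((\<lambda>t::real. t / r) has_real_derivative 1 / r) (at 0)"
    using r by (auto intro!: derivative_eq_intros)
  have "((\<lambda>t. G (t / r)) has_real_derivative Dl (v # \<gamma>) \<eta> y * (1 / r)) (at 0)"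
    using DERIV_chain2[where f=G and g="\<lambda>t. t / r" and x=0 and s=UNIV, OF _ dq] dG by simp
  then have d2: "((\<lambda>t. (1/r)^length \<gamma> * G (t / r)) has_real_derivative
      (1/r)^length \<gamma> * (Dl (v # \<gamma>) \<eta> y * (1 / r))) (at 0)"
    by (rule DERIV_cmult)
  have eq: "(\<lambda>t. Dl \<gamma> (eta_rx \<eta> r x0) (x + t *\<^sub>R v)) = (\<lambda>t. (1/r)^length \<gamma> * G (t / r))"
  proof
    fix t
    have "(1/r) *\<^sub>R (x + t *\<^sub>R v - x0) = y + (t / r) *\<^sub>R v"
      unfolding y_def by (simp add: algebra_simps divide_inverse)
    then show "Dl \<gamma> (eta_rx \<eta> r x0) (x + t *\<^sub>R v) = (1/r)^length \<gamma> * G (t / r)"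
      using form by (simp add: G_def)
  qed
  show ?thesis unfolding eq using d2 by (simp add: y_def mult_ac)
qed

lemma eta_formula:
  fixes \<eta> :: "'a::euclidean_space \<Rightarrow> real"
  assumes sm: "smooth_fun \<eta>" and r: "0 < r"
  shows "set \<gamma> \<subseteq> Basis \<Longrightarrow> \<forall>x. Dl \<gamma> (eta_rx \<eta> r x0) x = (1/r)^length \<gamma> * Dl \<gamma> \<eta> ((1/r) *\<^sub>R (x - x0))"
proof (induction \<gamma>)
  case Nil then show ?case by (simp add: eta_rx_def fun_eq_iff)
next
  case (Cons v \<gamma>)
  then have g: "set \<gamma> \<subseteq> Basis" and v: "v \<in> Basis" by auto
  show ?case
  proof
    fix x
    show "Dl (v # \<gamma>) (eta_rx \<eta> r x0) x = (1 / r) ^ length (v # \<gamma>) * Dl (v # \<gamma>) \<eta> ((1 / r) *\<^sub>R (x - x0))"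
      using DERIV_imp_deriv[OF eta_line_raw[OF sm r g v Cons.IH[OF g], of x]]
      by (simp add: pd_def)
  qed
qed

lemma eta_line:
  fixes \<eta> :: "'a::euclidean_space \<Rightarrow> real"
  assumes sm: "smooth_fun \<eta>" and r: "0 < r" and g: "set \<gamma> \<subseteq> Basis" and v: "v \<in> Basis"
  shows "(\<lambda>t. Dl \<gamma> (eta_rx \<eta> r x0) (x + t *\<^sub>R v)) differentiable (at 0)"
  using eta_line_raw[OF sm r g v eta_formula[OF sm r g]] real_differentiable_def by blast

lemma smooth_bounded:
  fixes \<eta> :: "'a::euclidean_space \<Rightarrow> real"
  assumes "cutoff \<eta>" "set \<gamma> \<subseteq> Basis"
  shows "\<exists>M. \<forall>x. \<bar>Dl \<gamma> \<eta> x\<bar> \<le> M"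
proof -
  have cont: "continuous_on UNIV (Dl \<gamma> \<eta>)" using assms unfolding cutoff_def smooth_fun_def by blast
  have "compact (Dl \<gamma> \<eta> ` cball 0 2)"
    by (rule compact_continuous_image[OF continuous_on_subset[OF cont]]) auto
  then obtain M where M: "\<forall>y\<in>Dl \<gamma> \<eta> ` cball 0 2. norm y \<le> M"
    using compact_imp_bounded bounded_iff by metis
  have z: "\<forall>x\<in>-cball 0 2. Dl \<gamma> \<eta> x = Dl \<gamma> (\<lambda>x. 0) x"
    by (rule Dl_local) (use assms in \<open>auto simp: cutoff_def\<close>)
  have "\<forall>x. \<bar>Dl \<gamma> \<eta> x\<bar> \<le> max M 0"
  proof
    fix x :: 'a
    show "\<bar>Dl \<gamma> \<eta> x\<bar> \<le> max M 0"
    proof (cases "x \<in> cball 0 2")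
      case True then have "norm (Dl \<gamma> \<eta> x) \<le> M" using M by blast
      then show ?thesis by simp
    next
      case False then show ?thesis using z by (simp add: Dl_zero)
    qed
  qed
  then show ?thesis by blast
qed


lemma eta_bd:
  fixes \<eta> :: "'a::euclidean_space \<Rightarrow> real"
  assumes c: "cutoff \<eta>" and r: "0 < r" and g: "set \<gamma> \<subseteq> Basis"
  shows "\<exists>M. \<forall>x. \<bar>Dl \<gamma> (eta_rx \<eta> r x0) x\<bar> \<le> M"
proof -
  have sm: "smooth_fun \<eta>" using c by (simp add: cutoff_def)
  obtain M where M: "\<forall>x. \<bar>Dl \<gamma> \<eta> x\<bar> \<le> M" using smooth_bounded[OF c g] by blast
  have "\<forall>x. \<bar>Dl \<gamma> (eta_rx \<eta> r x0) x\<bar> \<le> (1/r)^length \<gamma> * M"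
  proof
    fix x
    have "\<bar>Dl \<gamma> (eta_rx \<eta> r x0) x\<bar> = (1/r)^length \<gamma> * \<bar>Dl \<gamma> \<eta> ((1/r) *\<^sub>R (x - x0))\<bar>"
      using eta_formula[OF sm r g] r by (simp add: abs_mult)
    also have "\<dots> \<le> (1/r)^length \<gamma> * M" using M r by (intro mult_left_mono) auto
    finally show "\<bar>Dl \<gamma> (eta_rx \<eta> r x0) x\<bar> \<le> (1/r)^length \<gamma> * M" .
  qed
  then show ?thesis by blast
qed

lemma eta_lip:
  fixes \<eta> :: "'a::euclidean_space \<Rightarrow> real"
  assumes c: "cutoff \<eta>" and r: "0 < r" and g: "set \<gamma> \<subseteq> Basis"
  shows "\<exists>L. \<forall>x h. \<bar>Dl \<gamma> (eta_rx \<eta> r x0) (x + h) - Dl \<gamma> (eta_rx \<eta> r x0) x\<bar> \<le> L * norm h"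
proof -
  have sm: "smooth_fun \<eta>" using c by (simp add: cutoff_def)
  have "\<forall>v\<in>Basis. \<exists>M. \<forall>x. \<bar>pd v (Dl \<gamma> (eta_rx \<eta> r x0)) x\<bar> \<le> M"
    using eta_bd[OF c r, of "_ # \<gamma>"] g by simp
  then obtain Mf where Mf: "\<forall>v\<in>Basis. \<forall>x. \<bar>pd v (Dl \<gamma> (eta_rx \<eta> r x0)) x\<bar> \<le> Mf v"
    by metis
  define M where "M = Max (Mf ` Basis)"
  have "\<forall>v\<in>Basis. \<forall>x. \<bar>pd v (Dl \<gamma> (eta_rx \<eta> r x0)) x\<bar> \<le> M"
    using Mf unfolding M_def by (meson Max_ge finite_Basis finite_imageI imageI order.trans)
  moreover have "\<forall>v\<in>Basis. \<forall>x. (\<lambda>t. Dl \<gamma> (eta_rx \<eta> r x0) (x + t *\<^sub>R v)) differentiable (at 0)"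
    using eta_line[OF sm r g] by blast
  ultimately show ?thesis using lip_basis by blast
qed

definition bd :: "('a \<Rightarrow> real) \<Rightarrow> bool" where
  "bd F \<longleftrightarrow> (\<exists>M. \<forall>x. \<bar>F x\<bar> \<le> M)"

definition wb :: "(real \<Rightarrow> real) \<Rightarrow> nat \<Rightarrow> ('a::real_normed_vector \<Rightarrow> real) \<Rightarrow> bool" where
  "wb g k F \<longleftrightarrow> (\<exists>K. \<forall>x h. 0 < norm h \<and> norm h \<le> 1 \<longrightarrow>
      \<bar>F (x + h) - F x\<bar> \<le> K * (g (norm h) * norm h powr (- real k)))"

lemma bd_mult: "bd a \<Longrightarrow> bd b \<Longrightarrow> bd (\<lambda>x. a x * b x)"
proof -
  assume "bd a" "bd b"
  then obtain Ma Mb where "\<forall>x. \<bar>a x\<bar> \<le> Ma" "\<forall>x. \<bar>b x\<bar> \<le> Mb" by (auto simp: bd_def)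
  then have "\<forall>x. \<bar>a x * b x\<bar> \<le> Ma * Mb" by (simp add: abs_mult mult_mono')
  then show ?thesis by (auto simp: bd_def)
qed

lemma bd_add: "bd a \<Longrightarrow> bd b \<Longrightarrow> bd (\<lambda>x. a x + b x)"
proof -
  assume "bd a" "bd b"
  then obtain Ma Mb where "\<forall>x. \<bar>a x\<bar> \<le> Ma" "\<forall>x. \<bar>b x\<bar> \<le> Mb" by (auto simp: bd_def)
  then have "\<forall>x. \<bar>a x + b x\<bar> \<le> Ma + Mb" by (meson abs_triangle_ineq add_mono order.trans)
  then show ?thesis by (auto simp: bd_def)
qed

lemma wb_add: "wb g k a \<Longrightarrow> wb g k b \<Longrightarrow> (\<forall>t. 0 < t \<and> t \<le> 1 \<longrightarrow> 0 < g t) \<Longrightarrow> wb g k (\<lambda>x. a x + b x)"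
proof -
  assume "wb g k a" "wb g k b" and gp: "\<forall>t. 0 < t \<and> t \<le> 1 \<longrightarrow> 0 < g t"
  then obtain Ka Kb where A: "\<forall>x h. 0 < norm h \<and> norm h \<le> 1 \<longrightarrow>
      \<bar>a (x + h) - a x\<bar> \<le> Ka * (g (norm h) * norm h powr (- real k))"
    and B: "\<forall>x h. 0 < norm h \<and> norm h \<le> 1 \<longrightarrow>
      \<bar>b (x + h) - b x\<bar> \<le> Kb * (g (norm h) * norm h powr (- real k))" by (auto simp: wb_def)
  have "\<forall>x h. 0 < norm h \<and> norm h \<le> 1 \<longrightarrow>
      \<bar>(a (x + h) + b (x + h)) - (a x + b x)\<bar> \<le> (Ka + Kb) * (g (norm h) * norm h powr (- real k))"
  proof (intro allI impI)
    fix x h :: 'a assume h: "0 < norm h \<and> norm h \<le> 1"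
    have "\<bar>(a (x + h) + b (x + h)) - (a x + b x)\<bar> \<le> \<bar>a (x + h) - a x\<bar> + \<bar>b (x + h) - b x\<bar>" by linarith
    also have "\<dots> \<le> Ka * (g (norm h) * norm h powr (- real k)) + Kb * (g (norm h) * norm h powr (- real k))"
      using A B h by (intro add_mono) auto
    finally show "\<bar>(a (x + h) + b (x + h)) - (a x + b x)\<bar> \<le> (Ka + Kb) * (g (norm h) * norm h powr (- real k))"
      by (simp add: distrib_right)
  qed
  then show ?thesis unfolding wb_def by blast
qed

lemma wb_mult:
  assumes "bd a" "bd b" "wb g k a" "wb g k b"
  shows "wb g k (\<lambda>x. a x * b x)"
proof -
  obtain Ma Mb where Ma: "\<forall>x. \<bar>a x\<bar> \<le> Ma" and Mb: "\<forall>x. \<bar>b x\<bar> \<le> Mb" using assms by (auto simp: bd_def)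
  obtain Ka Kb where A: "\<forall>x h. 0 < norm h \<and> norm h \<le> 1 \<longrightarrow>
      \<bar>a (x + h) - a x\<bar> \<le> Ka * (g (norm h) * norm h powr (- real k))"
    and B: "\<forall>x h. 0 < norm h \<and> norm h \<le> 1 \<longrightarrow>
      \<bar>b (x + h) - b x\<bar> \<le> Kb * (g (norm h) * norm h powr (- real k))" using assms by (auto simp: wb_def)
  have "\<forall>x h. 0 < norm h \<and> norm h \<le> 1 \<longrightarrow>
      \<bar>a (x + h) * b (x + h) - a x * b x\<bar> \<le> (Ka * Mb + Ma * Kb) * (g (norm h) * norm h powr (- real k))"
  proof (intro allI impI)
    fix x h :: 'a assume h: "0 < norm h \<and> norm h \<le> 1"
    define W where "W = g (norm h) * norm h powr (- real k)"
    have e: "a (x + h) * b (x + h) - a x * b x = (a (x + h) - a x) * b (x + h) + a x * (b (x + h) - b x)"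
      by (simp add: algebra_simps)
    have "\<bar>a (x + h) * b (x + h) - a x * b x\<bar> \<le> \<bar>a (x + h) - a x\<bar> * \<bar>b (x + h)\<bar> + \<bar>a x\<bar> * \<bar>b (x + h) - b x\<bar>"
      unfolding e by (metis abs_mult abs_triangle_ineq)
    also have "\<dots> \<le> (Ka * W) * Mb + Ma * (Kb * W)"
    proof (rule add_mono)
      show "\<bar>a (x + h) - a x\<bar> * \<bar>b (x + h)\<bar> \<le> Ka * W * Mb"
        using A h Mb unfolding W_def by (intro mult_mono) (auto intro: order.trans[OF abs_ge_zero])
      show "\<bar>a x\<bar> * \<bar>b (x + h) - b x\<bar> \<le> Ma * (Kb * W)"
        using B h Ma unfolding W_def by (intro mult_mono) (auto intro: order.trans[OF abs_ge_zero])
    qed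
    finally show "\<bar>a (x + h) * b (x + h) - a x * b x\<bar> \<le> (Ka * Mb + Ma * Kb) * (g (norm h) * norm h powr (- real k))"
      unfolding W_def by (simp add: algebra_simps)
  qed
  then show ?thesis unfolding wb_def by blast
qed

lemma bd_sum_list: "(\<forall>p\<in>set L. bd (f p)) \<Longrightarrow> bd (\<lambda>x. \<Sum>p\<leftarrow>L. f p x)"
proof (induction L)
  case Nil then show ?case by (auto simp: bd_def)
next
  case (Cons p L) then show ?case using bd_add[of "f p" "\<lambda>x. \<Sum>p\<leftarrow>L. f p x"] by simp
qed

lemma wb_sum_list: "(\<forall>t. 0 < t \<and> t \<le> 1 \<longrightarrow> 0 < g t) \<Longrightarrow> (\<forall>p\<in>set L. wb g k (f p)) \<Longrightarrow> wb g k (\<lambda>x. \<Sum>p\<leftarrow>L. f p x)"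
proof (induction L)
  case Nil then show ?case by (auto simp: wb_def intro: exI[of _ 0])
next
  case (Cons p L) then show ?case using wb_add[of g k "f p" "\<lambda>x. \<Sum>p\<leftarrow>L. f p x"] by simp
qed

lemma lip_wb:
  fixes F :: "'a::real_normed_vector \<Rightarrow> real"
  assumes c0: "0 < c0" and low: "\<forall>t. 0 < t \<and> t \<le> 1 \<longrightarrow> c0 * t \<le> g t * t powr (- real k)"
    and L: "\<forall>x h. \<bar>F (x + h) - F x\<bar> \<le> L * norm h"
  shows "wb g k F"
proof -
  have "\<forall>x h. 0 < norm h \<and> norm h \<le> 1 \<longrightarrow> \<bar>F (x + h) - F x\<bar> \<le> (max L 0 / c0) * (g (norm h) * norm h powr (- real k))"
  proof (intro allI impI)
    fix x h :: 'a assume h: "0 < norm h \<and> norm h \<le> 1"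
    have "\<bar>F (x + h) - F x\<bar> \<le> max L 0 * norm h" using L by (meson max.cobounded1 mult_right_mono norm_ge_zero order.trans)
    also have "\<dots> = (max L 0 / c0) * (c0 * norm h)" using c0 by simp
    also have "\<dots> \<le> (max L 0 / c0) * (g (norm h) * norm h powr (- real k))"
      using low h c0 by (intro mult_left_mono) auto
    finally show "\<bar>F (x + h) - F x\<bar> \<le> (max L 0 / c0) * (g (norm h) * norm h powr (- real k))" .
  qed
  then show ?thesis unfolding wb_def by blast
qed

lemma wb_bdd:
  fixes F :: "'a::real_normed_vector \<Rightarrow> real"
  assumes gp: "\<forall>t. 0 < t \<and> t \<le> 1 \<longrightarrow> 0 < g t" and "wb g k F"
  shows "bdd_above (holder_quotients k g F)"
proof -
  obtain K where K: "\<forall>x h. 0 < norm h \<and> norm h \<le> 1 \<longrightarrow>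
      \<bar>F (x + h) - F x\<bar> \<le> K * (g (norm h) * norm h powr (- real k))" using assms by (auto simp: wb_def)
  show ?thesis unfolding bdd_above_def holder_quotients_def
  proof (intro exI ballI)
    fix q assume "q \<in> {\<bar>F (x + h) - F x\<bar> / (g (norm h) * norm h powr - real k) |x h. 0 < norm h \<and> norm h \<le> 1}"
    then obtain x h where q: "q = \<bar>F (x + h) - F x\<bar> / (g (norm h) * norm h powr - real k)" and h: "0 < norm h \<and> norm h \<le> 1" by blast
    have "0 < g (norm h) * norm h powr - real k" using gp h by simp
    then show "q \<le> K" unfolding q using K h by (simp add: divide_le_eq)
  qed
qed


lemma DERIV_sum_list:
  "(\<forall>p\<in>set L. ((f p) has_real_derivative f' p) (at x)) \<Longrightarrow>
   ((\<lambda>t. \<Sum>p\<leftarrow>L. f p t) has_real_derivative (\<Sum>p\<leftarrow>L. f' p)) (at x)"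
proof (induction L)
  case Nil then show ?case by simp
next
  case (Cons p L) then show ?case by (auto intro!: DERIV_add)
qed

lemma leibniz:
  fixes u e :: "'a::euclidean_space \<Rightarrow> real"
  assumes du: "\<forall>\<gamma> v x. set \<gamma> \<subseteq> Basis \<and> length \<gamma> < k \<and> v \<in> Basis \<longrightarrow> (\<lambda>t. Dl \<gamma> u (x + t *\<^sub>R v)) differentiable (at 0)"
    and de: "\<forall>\<gamma> v x. set \<gamma> \<subseteq> Basis \<and> v \<in> Basis \<longrightarrow> (\<lambda>t. Dl \<gamma> e (x + t *\<^sub>R v)) differentiable (at 0)"
  shows "set \<gamma> \<subseteq> Basis \<Longrightarrow> length \<gamma> \<le> k \<Longrightarrow>
    \<exists>L. (\<forall>p\<in>set L. set (fst p) \<subseteq> Basis \<and> set (snd p) \<subseteq> Basis \<and> length (fst p) \<le> length \<gamma>) \<and>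
        Dl \<gamma> (\<lambda>x. u x * e x) = (\<lambda>x. \<Sum>p\<leftarrow>L. Dl (fst p) u x * Dl (snd p) e x)"
proof (induction \<gamma>)
  case Nil
  show ?case by (intro exI[of _ "[([], [])]"]) auto
next
  case (Cons v \<gamma>)
  then have g: "set \<gamma> \<subseteq> Basis" and v: "v \<in> Basis" and lk: "length \<gamma> < k" by auto
  obtain L where L: "\<forall>p\<in>set L. set (fst p) \<subseteq> Basis \<and> set (snd p) \<subseteq> Basis \<and> length (fst p) \<le> length \<gamma>"
    and eq: "Dl \<gamma> (\<lambda>x. u x * e x) = (\<lambda>x. \<Sum>p\<leftarrow>L. Dl (fst p) u x * Dl (snd p) e x)"
    using Cons g lk by auto
  define L' where "L' = map (\<lambda>p. (v # fst p, snd p)) L @ map (\<lambda>p. (fst p, v # snd p)) L"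
  have "\<forall>p\<in>set L'. set (fst p) \<subseteq> Basis \<and> set (snd p) \<subseteq> Basis \<and> length (fst p) \<le> length (v # \<gamma>)"
    using L v unfolding L'_def by fastforce
  moreover have "Dl (v # \<gamma>) (\<lambda>x. u x * e x) = (\<lambda>x. \<Sum>p\<leftarrow>L'. Dl (fst p) u x * Dl (snd p) e x)"
  proof
    fix x
    have "\<forall>p\<in>set L. ((\<lambda>t. Dl (fst p) u (x + t *\<^sub>R v) * Dl (snd p) e (x + t *\<^sub>R v)) has_real_derivative
        (pd v (Dl (fst p) u) x * Dl (snd p) e x + Dl (fst p) u x * pd v (Dl (snd p) e) x)) (at 0)"
    proof
      fix p assume p: "p \<in> set L"
      have d1: "((\<lambda>t. Dl (fst p) u (x + t *\<^sub>R v)) has_real_derivative pd v (Dl (fst p) u) x) (at 0)"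
        using du L p lk v unfolding pd_def
        by (metis DERIV_deriv_iff_real_differentiable order.strict_trans1)
      have d2: "((\<lambda>t. Dl (snd p) e (x + t *\<^sub>R v)) has_real_derivative pd v (Dl (snd p) e) x) (at 0)"
        using de L p v unfolding pd_def
        by (metis DERIV_deriv_iff_real_differentiable)
      show "((\<lambda>t. Dl (fst p) u (x + t *\<^sub>R v) * Dl (snd p) e (x + t *\<^sub>R v)) has_real_derivative
        (pd v (Dl (fst p) u) x * Dl (snd p) e x + Dl (fst p) u x * pd v (Dl (snd p) e) x)) (at 0)"
        using DERIV_mult[OF d1 d2] by (simp add: mult.commute)
    qed
    then have "((\<lambda>t. \<Sum>p\<leftarrow>L. Dl (fst p) u (x + t *\<^sub>R v) * Dl (snd p) e (x + t *\<^sub>R v)) has_real_derivative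
        (\<Sum>p\<leftarrow>L. pd v (Dl (fst p) u) x * Dl (snd p) e x + Dl (fst p) u x * pd v (Dl (snd p) e) x)) (at 0)"
      by (rule DERIV_sum_list)
    then have "Dl (v # \<gamma>) (\<lambda>x. u x * e x) x =
        (\<Sum>p\<leftarrow>L. pd v (Dl (fst p) u) x * Dl (snd p) e x + Dl (fst p) u x * pd v (Dl (snd p) e) x)"
      by (simp add: eq pd_def DERIV_imp_deriv)
    also have "\<dots> = (\<Sum>p\<leftarrow>L'. Dl (fst p) u x * Dl (snd p) e x)"
      unfolding L'_def by (simp add: sum_list_addf o_def)
    finally show "Dl (v # \<gamma>) (\<lambda>x. u x * e x) x = (\<Sum>p\<leftarrow>L'. Dl (fst p) u x * Dl (snd p) e x)" .
  qed
  ultimately show ?case by blast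
qed


lemma lip_from_bd:
  fixes F :: "'a::euclidean_space \<Rightarrow> real"
  assumes "\<forall>v\<in>Basis. \<forall>x. (\<lambda>t. F (x + t *\<^sub>R v)) differentiable (at 0)"
    and "\<forall>v\<in>Basis. bd (pd v F)"
  shows "\<exists>L. \<forall>x h. \<bar>F (x + h) - F x\<bar> \<le> L * norm h"
proof -
  obtain Mf where Mf: "\<forall>v\<in>Basis. \<forall>x. \<bar>pd v F x\<bar> \<le> Mf v"
    using assms(2) unfolding bd_def by metis
  define M where "M = Max (Mf ` Basis)"
  have "\<forall>v\<in>Basis. \<forall>x. \<bar>pd v F x\<bar> \<le> M"
    using Mf unfolding M_def by (meson Max_ge finite_Basis finite_imageI imageI order.trans)
  then show ?thesis using lip_basis[OF assms(1)] by blast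
qed

lemma bdd_wb:
  fixes F :: "'a::real_normed_vector \<Rightarrow> real"
  assumes gp: "\<forall>t. 0 < t \<and> t \<le> 1 \<longrightarrow> 0 < g t" and b: "bdd_above (holder_quotients k g F)"
  shows "wb g k F"
proof -
  obtain K where K: "\<forall>q\<in>holder_quotients k g F. q \<le> K" using b unfolding bdd_above_def by blast
  have "\<forall>x h. 0 < norm h \<and> norm h \<le> 1 \<longrightarrow> \<bar>F (x + h) - F x\<bar> \<le> K * (g (norm h) * norm h powr (- real k))"
  proof (intro allI impI)
    fix x h :: 'a assume h: "0 < norm h \<and> norm h \<le> 1"
    have pos: "0 < g (norm h) * norm h powr - real k" using gp h by simp
    have "\<bar>F (x + h) - F x\<bar> / (g (norm h) * norm h powr - real k) \<le> K"
      using K h unfolding holder_quotients_def by blast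
    then show "\<bar>F (x + h) - F x\<bar> \<le> K * (g (norm h) * norm h powr (- real k))"
      using pos by (simp add: divide_le_eq)
  qed
  then show ?thesis unfolding wb_def by blast
qed

lemma bounded_range_bd: "bounded (range (F :: 'a \<Rightarrow> real)) \<longleftrightarrow> bd F"
  unfolding bounded_iff bd_def by auto

lemma local_nice:
  fixes u :: "'a::euclidean_space \<Rightarrow> real" and \<eta> :: "'a \<Rightarrow> real"
  assumes gp: "\<forall>t. 0 < t \<and> t \<le> 1 \<longrightarrow> 0 < g t"
    and c0: "0 < c0" and low: "\<forall>t. 0 < t \<and> t \<le> 1 \<longrightarrow> c0 * t \<le> g t * t powr (- real k)"
    and du: "\<forall>\<gamma> v x. set \<gamma> \<subseteq> Basis \<and> length \<gamma> < k \<and> v \<in> Basis \<longrightarrow> (\<lambda>t. Dl \<gamma> u (x + t *\<^sub>R v)) differentiable (at 0)"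
    and bu: "\<forall>\<gamma>. set \<gamma> \<subseteq> Basis \<and> length \<gamma> \<le> k \<longrightarrow> bd (Dl \<gamma> u)"
    and qu: "\<forall>\<gamma>\<in>multi_indices k. bdd_above (holder_quotients k g (Dl \<gamma> u))"
    and c: "cutoff \<eta>" and r: "0 < r"
  shows "\<forall>\<gamma>. set \<gamma> \<subseteq> Basis \<and> length \<gamma> \<le> k \<longrightarrow> bd (Dl \<gamma> (\<lambda>x. u x * eta_rx \<eta> r x0 x))"
    and "\<forall>\<gamma>\<in>multi_indices k. bdd_above (holder_quotients k g (Dl \<gamma> (\<lambda>x. u x * eta_rx \<eta> r x0 x)))"
proof -
  let ?e = "eta_rx \<eta> r x0"
  have sm: "smooth_fun \<eta>" using c by (simp add: cutoff_def)
  have de: "\<forall>\<gamma> v x. set \<gamma> \<subseteq> Basis \<and> v \<in> Basis \<longrightarrow> (\<lambda>t. Dl \<gamma> ?e (x + t *\<^sub>R v)) differentiable (at 0)"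
    using eta_line[OF sm r] by blast
  have be: "bd (Dl b ?e)" if "set b \<subseteq> Basis" for b
    using eta_bd[OF c r that] unfolding bd_def by blast
  have we: "wb g k (Dl b ?e)" if "set b \<subseteq> Basis" for b
    using eta_lip[OF c r that] lip_wb[OF c0 low] by blast
  have wu: "wb g k (Dl a u)" if a: "set a \<subseteq> Basis" "length a \<le> k" for a
  proof (cases "length a < k")
    case True
    have "\<forall>v\<in>Basis. bd (pd v (Dl a u))"
    proof
      fix v :: 'a assume v: "v \<in> Basis"
      have "set (v # a) \<subseteq> Basis \<and> length (v # a) \<le> k" using a v True by auto
      then have "bd (Dl (v # a) u)" using bu by blast
      then show "bd (pd v (Dl a u))" by simp
    qed
    moreover have "\<forall>v\<in>Basis. \<forall>x. (\<lambda>t. Dl a u (x + t *\<^sub>R v)) differentiable (at 0)"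
      using du a True by blast
    ultimately obtain L where "\<forall>x h. \<bar>Dl a u (x + h) - Dl a u x\<bar> \<le> L * norm h"
      using lip_from_bd by blast
    then show ?thesis using lip_wb[OF c0 low] by blast
  next
    case False
    then have "a \<in> multi_indices k" using a by (simp add: multi_indices_def)
    then show ?thesis using qu bdd_wb[OF gp] by blast
  qed
  have main: "bd (Dl \<gamma> (\<lambda>x. u x * ?e x)) \<and> wb g k (Dl \<gamma> (\<lambda>x. u x * ?e x))"
    if \<gamma>: "set \<gamma> \<subseteq> Basis" "length \<gamma> \<le> k" for \<gamma>
  proof -
    obtain L where L: "\<forall>p\<in>set L. set (fst p) \<subseteq> Basis \<and> set (snd p) \<subseteq> Basis \<and> length (fst p) \<le> length \<gamma>"
      and eq: "Dl \<gamma> (\<lambda>x. u x * ?e x) = (\<lambda>x. \<Sum>p\<leftarrow>L. Dl (fst p) u x * Dl (snd p) ?e x)"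
      using leibniz[OF du de \<gamma>] by blast
    have "\<forall>p\<in>set L. bd (\<lambda>x. Dl (fst p) u x * Dl (snd p) ?e x)"
      using L \<gamma> bu be by (auto intro!: bd_mult)
    moreover have "\<forall>p\<in>set L. wb g k (\<lambda>x. Dl (fst p) u x * Dl (snd p) ?e x)"
      using L \<gamma> bu be we wu by (auto intro!: wb_mult)
    ultimately show ?thesis unfolding eq
      using bd_sum_list[of L "\<lambda>p x. Dl (fst p) u x * Dl (snd p) ?e x"]
        wb_sum_list[OF gp, of L k "\<lambda>p x. Dl (fst p) u x * Dl (snd p) ?e x"] by blast
  qed
  show "\<forall>\<gamma>. set \<gamma> \<subseteq> Basis \<and> length \<gamma> \<le> k \<longrightarrow> bd (Dl \<gamma> (\<lambda>x. u x * eta_rx \<eta> r x0 x))"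
    using main by blast
  show "\<forall>\<gamma>\<in>multi_indices k. bdd_above (holder_quotients k g (Dl \<gamma> (\<lambda>x. u x * eta_rx \<eta> r x0 x)))"
  proof
    fix \<gamma> :: "'a list" assume "\<gamma> \<in> multi_indices k"
    then have "set \<gamma> \<subseteq> Basis" "length \<gamma> \<le> k" by (auto simp: multi_indices_def)
    then have "wb g k (Dl \<gamma> (\<lambda>x. u x * eta_rx \<eta> r x0 x))" using main by blast
    then show "bdd_above (holder_quotients k g (Dl \<gamma> (\<lambda>x. u x * eta_rx \<eta> r x0 x)))"
      by (rule wb_bdd[OF gp])
  qed
qed


lemma mi_finite: "finite (multi_indices j :: 'a::euclidean_space list set)"
  unfolding multi_indices_def by (rule finite_lists_length_eq[OF finite_Basis])

lemma mi_ne: "multi_indices j \<noteq> ({} :: 'a::euclidean_space list set)"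
proof -
  obtain b0 :: 'a where b0: "b0 \<in> Basis" using nonempty_Basis by blast
  then have "replicate j b0 \<in> multi_indices j" by (auto simp: multi_indices_def)
  then show ?thesis by blast
qed

lemma hq_ne: "holder_quotients k g (F :: 'a::euclidean_space \<Rightarrow> real) \<noteq> {}"
proof -
  obtain b0 :: 'a where b0: "b0 \<in> Basis" using nonempty_Basis by blast
  then have "norm b0 = 1" by simp
  then have "\<bar>F (0 + b0) - F 0\<bar> / (g (norm b0) * norm b0 powr - real k) \<in> holder_quotients k g F"
    unfolding holder_quotients_def by fastforce
  then show ?thesis by blast
qed

lemma hq_nonneg:
  assumes gp: "\<forall>t. 0 < t \<and> t \<le> 1 \<longrightarrow> 0 < g t" and "q \<in> holder_quotients k g F"
  shows "0 \<le> q"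
proof -
  obtain x h where q: "q = \<bar>F (x + h) - F x\<bar> / (g (norm h) * norm h powr - real k)" and h: "0 < norm h" "norm h \<le> 1"
    using assms(2) unfolding holder_quotients_def by blast
  have "0 < g (norm h)" using gp h by blast
  then show ?thesis unfolding q by simp
qed

lemma cnorm_lower:
  fixes F :: "'a::euclidean_space \<Rightarrow> real"
  assumes gp: "\<forall>t. 0 < t \<and> t \<le> 1 \<longrightarrow> 0 < g t" and k: "holder_order g = k"
    and b: "\<forall>\<gamma>. set \<gamma> \<subseteq> Basis \<and> length \<gamma> \<le> k \<longrightarrow> bd (Dl \<gamma> F)"
    and q: "\<forall>\<gamma>\<in>multi_indices k. bdd_above (holder_quotients k g (Dl \<gamma> F))"
  shows "\<forall>\<gamma> y. set \<gamma> \<subseteq> Basis \<and> length \<gamma> \<le> k \<longrightarrow> \<bar>Dl \<gamma> F y\<bar> \<le> Cnorm g F"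
    and "\<forall>\<gamma>\<in>multi_indices k. \<forall>q\<in>holder_quotients k g (Dl \<gamma> F). q \<le> Cnorm g F"
    and "0 \<le> Cnorm g F"
proof -
  have sn: "\<bar>Dl \<gamma> F y\<bar> \<le> sup_norm (Dl \<gamma> F)" if "set \<gamma> \<subseteq> Basis" "length \<gamma> \<le> k" for \<gamma> y
  proof -
    have "bd (Dl \<gamma> F)" using b that by blast
    then obtain M where "\<forall>x. \<bar>Dl \<gamma> F x\<bar> \<le> M" unfolding bd_def by blast
    then have "bdd_above (range (\<lambda>x. \<bar>Dl \<gamma> F x\<bar>))" by (auto intro: bdd_aboveI2)
    then show ?thesis unfolding sup_norm_def by (rule cSUP_upper[OF UNIV_I])
  qed
  have dn: "sup_norm (Dl \<gamma> F) \<le> Dnorm j F" if "\<gamma> \<in> multi_indices j" for \<gamma> j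
    unfolding Dnorm_def using that mi_finite by (intro cSUP_upper) (auto intro!: bdd_above_finite finite_imageI)
  have dn0: "0 \<le> Dnorm j F" if "j \<le> k" for j
  proof -
    obtain \<gamma> :: "'a list" where g: "\<gamma> \<in> multi_indices j" using mi_ne by blast
    then have "set \<gamma> \<subseteq> Basis" "length \<gamma> \<le> k" using that by (auto simp: multi_indices_def)
    then show ?thesis using sn[of \<gamma> 0] dn[OF g] by linarith
  qed
  have sq: "q \<le> holder_semi k g (Dl \<gamma> F)" if "\<gamma> \<in> multi_indices k" "q \<in> holder_quotients k g (Dl \<gamma> F)" for \<gamma> q
    unfolding holder_semi_def using that q by (intro cSup_upper) auto
  have s0: "0 \<le> holder_semi k g (Dl \<gamma> F)" if "\<gamma> \<in> multi_indices k" for \<gamma>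
  proof -
    obtain q where "q \<in> holder_quotients k g (Dl \<gamma> F)" using hq_ne by blast
    then show ?thesis using sq[OF that] hq_nonneg[OF gp] by (meson order.trans)
  qed
  have ss: "holder_semi k g (Dl \<gamma> F) \<le> (SUP \<gamma>\<in>multi_indices k. holder_semi k g (Dl \<gamma> F))" if "\<gamma> \<in> multi_indices k" for \<gamma>
    using that mi_finite by (intro cSUP_upper) (auto intro!: bdd_above_finite finite_imageI)
  have S0: "0 \<le> (SUP \<gamma>\<in>multi_indices k. holder_semi k g (Dl \<gamma> F))"
  proof -
    obtain \<gamma> :: "'a list" where "\<gamma> \<in> multi_indices k" using mi_ne by blast
    then show ?thesis using ss s0 by (meson order.trans)
  qed
  have C: "Cnorm g F = (\<Sum>j\<le>k. Dnorm j F) + (SUP \<gamma>\<in>multi_indices k. holder_semi k g (Dl \<gamma> F))"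
    unfolding Cnorm_def k by simp
  have sumge: "Dnorm j F \<le> (\<Sum>j\<le>k. Dnorm j F)" if "j \<le> k" for j
    using that dn0 by (intro member_le_sum) auto
  have sum0: "0 \<le> (\<Sum>j\<le>k. Dnorm j F)" using dn0 by (intro sum_nonneg) auto
  show "\<forall>\<gamma> y. set \<gamma> \<subseteq> Basis \<and> length \<gamma> \<le> k \<longrightarrow> \<bar>Dl \<gamma> F y\<bar> \<le> Cnorm g F"
  proof (intro allI impI)
    fix \<gamma> :: "'a list" and y assume h: "set \<gamma> \<subseteq> Basis \<and> length \<gamma> \<le> k"
    then have m: "\<gamma> \<in> multi_indices (length \<gamma>)" by (simp add: multi_indices_def)
    show "\<bar>Dl \<gamma> F y\<bar> \<le> Cnorm g F"
      using sn[of \<gamma> y] dn[OF m] sumge[of "length \<gamma>"] h S0 unfolding C by linarith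
  qed
  show "\<forall>\<gamma>\<in>multi_indices k. \<forall>q\<in>holder_quotients k g (Dl \<gamma> F). q \<le> Cnorm g F"
    using sq ss sum0 unfolding C by (meson add_increasing order.trans)
  show "0 \<le> Cnorm g F" unfolding C using sum0 S0 by simp
qed

lemma cnorm_upper:
  fixes F :: "'a::euclidean_space \<Rightarrow> real"
  assumes k: "holder_order g = k"
    and B1: "\<forall>j\<le>k. \<forall>\<gamma>\<in>multi_indices j. \<forall>y. \<bar>Dl \<gamma> F y\<bar> \<le> B1"
    and B2: "\<forall>\<gamma>\<in>multi_indices k. \<forall>q\<in>holder_quotients k g (Dl \<gamma> F). q \<le> B2"
  shows "Cnorm g F \<le> (real k + 1) * B1 + B2"
proof -
  have C: "Cnorm g F = (\<Sum>j\<le>k. Dnorm j F) + (SUP \<gamma>\<in>multi_indices k. holder_semi k g (Dl \<gamma> F))"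
    unfolding Cnorm_def k by simp
  have "Dnorm j F \<le> B1" if "j \<le> k" for j
    unfolding Dnorm_def sup_norm_def using B1 that mi_ne
    by (intro cSUP_least) auto
  then have "(\<Sum>j\<le>k. Dnorm j F) \<le> (\<Sum>j\<le>k. B1)" by (intro sum_mono) auto
  moreover have "(SUP \<gamma>\<in>multi_indices k. holder_semi k g (Dl \<gamma> F)) \<le> B2"
    unfolding holder_semi_def
  proof (rule cSUP_least[OF mi_ne])
    fix \<gamma> :: "'a list" assume "\<gamma> \<in> multi_indices k"
    then show "Sup (holder_quotients k g (Dl \<gamma> F)) \<le> B2"
      using B2 by (intro cSup_least[OF hq_ne]) auto
  qed
  ultimately show ?thesis unfolding C by (simp add: algebra_simps)
qed


lemma inc_down:
  assumes gp: "\<forall>t. 0 < t \<and> t \<le> 1 \<longrightarrow> 0 < g t"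
    and inc: "almost_increasing (\<lambda>r. g r / r powr \<alpha>)" and le: "\<alpha>' \<le> \<alpha>"
  shows "almost_increasing (\<lambda>r. g r / r powr \<alpha>')"
proof -
  obtain c where c: "0 < c" "c \<le> 1" "\<forall>r R. 0 < r \<and> r \<le> R \<and> R \<le> 1 \<longrightarrow> c * (g r / r powr \<alpha>) \<le> g R / R powr \<alpha>"
    using inc unfolding almost_increasing_def by blast
  have "\<forall>r R. 0 < r \<and> r \<le> R \<and> R \<le> 1 \<longrightarrow> c * (g r / r powr \<alpha>') \<le> g R / R powr \<alpha>'"
  proof (intro allI impI)
    fix r R :: real assume h: "0 < r \<and> r \<le> R \<and> R \<le> 1"
    have e1: "g r / r powr \<alpha>' = (g r / r powr \<alpha>) * r powr (\<alpha> - \<alpha>')"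
      using h by (simp add: powr_diff field_simps)
    have e2: "g R / R powr \<alpha>' = (g R / R powr \<alpha>) * R powr (\<alpha> - \<alpha>')"
      using h by (simp add: powr_diff field_simps)
    have p: "r powr (\<alpha> - \<alpha>') \<le> R powr (\<alpha> - \<alpha>')" using h le by (intro powr_mono2) auto
    have "0 \<le> c * (g r / r powr \<alpha>)" using c gp h by (intro mult_nonneg_nonneg divide_nonneg_pos) auto
    moreover have "0 < g R" using gp h by auto
    ultimately have "c * (g r / r powr \<alpha>) * r powr (\<alpha> - \<alpha>') \<le> (g R / R powr \<alpha>) * R powr (\<alpha> - \<alpha>')"
      using c(3) h p by (intro mult_mono) auto
    then show "c * (g r / r powr \<alpha>') \<le> g R / R powr \<alpha>'" unfolding e1 e2 by (simp add: mult.assoc)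
  qed
  then show ?thesis unfolding almost_increasing_def using c by blast
qed

lemma dec_up:
  assumes gp: "\<forall>t. 0 < t \<and> t \<le> 1 \<longrightarrow> 0 < g t"
    and dec: "almost_decreasing (\<lambda>r. g r / r powr \<beta>)" and le: "\<beta> \<le> \<beta>'"
  shows "almost_decreasing (\<lambda>r. g r / r powr \<beta>')"
proof -
  obtain C where C: "1 \<le> C" "\<forall>r R. 0 < r \<and> r \<le> R \<and> R \<le> 1 \<longrightarrow> g R / R powr \<beta> \<le> C * (g r / r powr \<beta>)"
    using dec unfolding almost_decreasing_def by blast
  have "\<forall>r R. 0 < r \<and> r \<le> R \<and> R \<le> 1 \<longrightarrow> g R / R powr \<beta>' \<le> C * (g r / r powr \<beta>')"
  proof (intro allI impI)
    fix r R :: real assume h: "0 < r \<and> r \<le> R \<and> R \<le> 1"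
    have e1: "g r / r powr \<beta>' = (g r / r powr \<beta>) * r powr (\<beta> - \<beta>')"
      using h by (simp add: powr_diff field_simps)
    have e2: "g R / R powr \<beta>' = (g R / R powr \<beta>) * R powr (\<beta> - \<beta>')"
      using h by (simp add: powr_diff field_simps)
    have p: "R powr (\<beta> - \<beta>') \<le> r powr (\<beta> - \<beta>')" using h le by (intro powr_mono2') auto
    have "0 < g R" using gp h by auto
    then have "0 \<le> g R / R powr \<beta>" by simp
    moreover have "0 \<le> C * (g r / r powr \<beta>)" using gp h C(1) by (intro mult_nonneg_nonneg) auto
    ultimately
    have "(g R / R powr \<beta>) * R powr (\<beta> - \<beta>') \<le> C * (g r / r powr \<beta>) * r powr (\<beta> - \<beta>')"
      using C(2) h p by (intro mult_mono) auto
    then show "g R / R powr \<beta>' \<le> C * (g r / r powr \<beta>')" unfolding e1 e2 by (simp add: mult.assoc)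
  qed
  then show ?thesis unfolding almost_decreasing_def using C by blast
qed

lemma inc_le_dec:
  assumes gp: "\<forall>t. 0 < t \<and> t \<le> 1 \<longrightarrow> 0 < g t"
    and inc: "almost_increasing (\<lambda>r. g r / r powr \<alpha>)"
    and dec: "almost_decreasing (\<lambda>r. g r / r powr \<beta>)"
  shows "\<alpha> \<le> \<beta>"
proof (rule ccontr)
  assume "\<not> \<alpha> \<le> \<beta>"
  then have ab: "\<beta> < \<alpha>" by simp
  obtain c where c: "0 < c" "\<forall>r R. 0 < r \<and> r \<le> R \<and> R \<le> 1 \<longrightarrow> c * (g r / r powr \<alpha>) \<le> g R / R powr \<alpha>"
    using inc unfolding almost_increasing_def by blast
  obtain C where C: "1 \<le> C" "\<forall>r R. 0 < r \<and> r \<le> R \<and> R \<le> 1 \<longrightarrow> g R / R powr \<beta> \<le> C * (g r / r powr \<beta>)"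
    using dec unfolding almost_decreasing_def by blast
  have g1: "0 < g 1" using gp by simp
  define t where "t = min 1 ((c / (2 * C)) powr (1 / (\<alpha> - \<beta>)))"
  have t0: "0 < t" "t \<le> 1" using c C by (auto simp: t_def)
  have "c * (g t / t powr \<alpha>) \<le> g 1" using c(2)[rule_format, of t 1] t0 by simp
  moreover have "g 1 \<le> C * (g t / t powr \<beta>)" using C(2)[rule_format, of t 1] t0 by simp
  ultimately have "c * (g t / t powr \<alpha>) \<le> C * (g t / t powr \<beta>)" by linarith
  then have "c * g t * t powr \<beta> \<le> C * g t * t powr \<alpha>"
    using t0 by (simp add: field_simps)
  then have "c * t powr \<beta> \<le> C * t powr \<alpha>" using gp t0 by (simp add: mult.commute mult.left_commute)
  then have "c \<le> C * t powr (\<alpha> - \<beta>)" using t0 by (simp add: powr_diff field_simps)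
  moreover have "t powr (\<alpha> - \<beta>) \<le> c / (2 * C)"
  proof -
    have "t powr (\<alpha> - \<beta>) \<le> ((c / (2 * C)) powr (1 / (\<alpha> - \<beta>))) powr (\<alpha> - \<beta>)"
      using t0 ab by (intro powr_mono2) (auto simp: t_def)
    also have "\<dots> = c / (2 * C)" using ab c C by (simp add: powr_powr)
    finally show ?thesis .
  qed
  ultimately have "c \<le> C * (c / (2 * C))" using C by (meson mult_left_mono order.trans zero_le_one order_trans)
  then show False using c C by (simp add: field_simps)
qed


lemma ereal_between: "ereal a \<le> x \<Longrightarrow> x \<le> ereal b \<Longrightarrow> \<exists>m. x = ereal m"
  by (cases x) auto

lemma index_cases:
  fixes g :: "real \<Rightarrow> real"
  assumes gp: "\<forall>t. 0 < t \<and> t \<le> 1 \<longrightarrow> 0 < g t" and g1: "g 1 = 1"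
    and I: "index_interval g \<subseteq> {0<..<1} \<union> {1<..<2} \<union> {2<..<3}"
    and nb: "\<not> (\<exists>c>0. \<forall>t. 0 < t \<and> t \<le> 1 \<longrightarrow> c \<le> g t)"
  shows "(\<exists>c0>0. \<forall>t. 0 < t \<and> t \<le> 1 \<longrightarrow> c0 * t \<le> g t * t powr (- real (holder_order g)))
       \<or> (\<forall>\<alpha>. almost_increasing (\<lambda>r. g r / r powr \<alpha>))"
proof -
  let ?Inc = "\<lambda>\<alpha>. almost_increasing (\<lambda>r. g r / r powr \<alpha>)"
  let ?Dec = "\<lambda>\<beta>. almost_decreasing (\<lambda>r. g r / r powr \<beta>)"
  let ?LI = "{ereal \<alpha> |\<alpha>. ?Inc \<alpha>}"
  let ?UD = "{ereal \<beta> |\<beta>. ?Dec \<beta>}"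
  have lo: "lower_index g = Sup ?LI" by (simp add: lower_index_def)
  have up: "upper_index g = Inf ?UD" by (simp add: upper_index_def)
  have memI: "x \<in> index_interval g \<longleftrightarrow> Sup ?LI \<le> ereal x \<and> ereal x \<le> Inf ?UD" for x
    by (simp add: index_interval_def lo up)
  have Ibad: "x \<notin> index_interval g" if "x \<le> 0 \<or> 3 \<le> x \<or> x = 1 \<or> x = 2" for x
    using I that by auto
  show ?thesis
  proof (cases "\<exists>\<beta>. ?Dec \<beta>")
    case False
    then have U: "Inf ?UD = top" by simp
    show ?thesis
    proof (cases "\<forall>\<alpha>. ?Inc \<alpha>")
      case True then show ?thesis by blast
    next
      case False
      then obtain \<alpha>0 where a0: "\<not> ?Inc \<alpha>0" by blast
      have "\<alpha> < \<alpha>0" if "?Inc \<alpha>" for \<alpha>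
        using inc_down[OF gp that, of \<alpha>0] a0 by (cases "\<alpha>0 \<le> \<alpha>") auto
      then have "Sup ?LI \<le> ereal \<alpha>0" by (intro Sup_least) (auto intro: less_imp_le)
      then have "max \<alpha>0 3 + 1 \<in> index_interval g" unfolding memI U
        by (simp add: order.trans[of _ "ereal \<alpha>0"])
      moreover have "3 \<le> max \<alpha>0 3 + 1" by simp
      ultimately show ?thesis using Ibad[of "max \<alpha>0 3 + 1"] by blast
    qed
  next
    case True
    then obtain \<beta>0 where b0: "?Dec \<beta>0" by blast
    show ?thesis
    proof (cases "\<exists>\<alpha>. ?Inc \<alpha>")
      case False
      then have L: "Sup ?LI = bot" by simp
      show ?thesis
      proof (cases "\<forall>\<beta>. ?Dec \<beta>")
        case True
        then have "?Dec (-1)" by blast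
        then obtain C where C: "1 \<le> C" "\<forall>r R. 0 < r \<and> r \<le> R \<and> R \<le> 1 \<longrightarrow> g R / R powr -1 \<le> C * (g r / r powr -1)"
          unfolding almost_decreasing_def by blast
        have "\<forall>t. 0 < t \<and> t \<le> 1 \<longrightarrow> 1 / C \<le> g t"
        proof (intro allI impI)
          fix t :: real assume t: "0 < t \<and> t \<le> 1"
          have "1 \<le> C * (g t * t)" using C(2)[rule_format, of t 1] t g1 by (simp add: powr_minus_divide)
          also have "\<dots> \<le> C * g t" using t C gp by (intro mult_left_mono) (auto intro: mult_left_le)
          finally show "1 / C \<le> g t" using C by (simp add: field_simps)
        qed
        moreover have "0 < 1 / C" using C by simp
        ultimately show ?thesis using nb by blast
      next
        case False
        then obtain \<beta>1 where b1: "\<not> ?Dec \<beta>1" by blast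
        have "\<beta>1 < \<beta>" if "?Dec \<beta>" for \<beta>
          using dec_up[OF gp that, of \<beta>1] b1 by (cases "\<beta> \<le> \<beta>1") auto
        then have "ereal \<beta>1 \<le> Inf ?UD" by (intro Inf_greatest) (auto intro: less_imp_le)
        then have "min \<beta>1 0 - 1 \<in> index_interval g" unfolding memI L
          by (simp add: order.trans[of _ "ereal \<beta>1"])
        moreover have "min \<beta>1 0 - 1 \<le> 0" by simp
        ultimately show ?thesis using Ibad[of "min \<beta>1 0 - 1"] by blast
      qed
    next
      case True
      then obtain \<alpha>0 where a0: "?Inc \<alpha>0" by blast
      have le1: "Sup ?LI \<le> ereal \<beta>0" using inc_le_dec[OF gp _ b0] by (intro Sup_least) auto
      have le2: "ereal \<alpha>0 \<le> Sup ?LI" using a0 by (intro Sup_upper) auto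
      have le3: "ereal \<alpha>0 \<le> Inf ?UD" using inc_le_dec[OF gp a0] by (intro Inf_greatest) auto
      have le4: "Inf ?UD \<le> ereal \<beta>0" using b0 by (intro Inf_lower) auto
      have le5: "Sup ?LI \<le> Inf ?UD"
      proof (rule Sup_least)
        fix x assume "x \<in> ?LI"
        then obtain \<alpha> where "x = ereal \<alpha>" "?Inc \<alpha>" by blast
        then show "x \<le> Inf ?UD" using inc_le_dec[OF gp] by (intro Inf_greatest) auto
      qed
      obtain m where m: "Sup ?LI = ereal m" using ereal_between[OF le2 le1] by blast
      obtain M where M: "Inf ?UD = ereal M" using ereal_between[OF le3 le4] by blast
      have mM: "m \<le> M" using le5 m M by simp
      have "m \<in> index_interval g" unfolding memI m M using mM by simp
      then have mI: "m \<in> {0<..<1} \<union> {1<..<2} \<union> {2<..<3}" using I by blast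
      define k0 :: nat where "k0 = (if m < 1 then 0 else if m < 2 then 1 else 2)"
      have k0m: "real k0 < m" "m < real k0 + 1" using mI by (auto simp: k0_def)
      have k0e: "real k0 + 1 = 1 \<or> real k0 + 1 = 2 \<or> real k0 + 1 = 3" by (auto simp: k0_def)
      have ho: "holder_order g = k0"
        unfolding holder_order_def lo m
      proof (rule the_equality)
        show "ereal (real k0) < ereal m \<and> ereal m \<le> ereal (real k0 + 1)" using k0m by simp
      next
        fix k assume "ereal (real k) < ereal m \<and> ereal m \<le> ereal (real k + 1)"
        then have "real k < m" "m \<le> real k + 1" by auto
        then have "real k < real (k0 + 1)" "real k0 < real (k + 1)" using k0m by auto
        then have "k < k0 + 1" "k0 < k + 1" by (simp_all only: of_nat_less_iff)
        then show "k = k0" by simp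
      qed
      have Mk: "M < real k0 + 1"
      proof (rule ccontr)
        assume "\<not> M < real k0 + 1"
        then have "real k0 + 1 \<in> index_interval g" unfolding memI m M using k0m by simp
        moreover have "real k0 + 1 \<notin> index_interval g" by (rule Ibad) (use k0e in linarith)
        ultimately show False by blast
      qed
      then have "Inf ?UD < ereal (real k0 + 1)" using M by simp
      then obtain x where "x \<in> ?UD" "x < ereal (real k0 + 1)" by (auto simp: Inf_less_iff)
      then obtain \<beta> where bb: "?Dec \<beta>" "\<beta> < real k0 + 1" by auto
      have "?Dec (real k0 + 1)" using dec_up[OF gp bb(1), of "real k0 + 1"] bb(2) by simp
      then obtain C where C: "1 \<le> C" "\<forall>r R. 0 < r \<and> r \<le> R \<and> R \<le> 1 \<longrightarrow> g R / R powr (real k0 + 1) \<le> C * (g r / r powr (real k0 + 1))"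
        unfolding almost_decreasing_def by blast
      have "\<forall>t. 0 < t \<and> t \<le> 1 \<longrightarrow> (1 / C) * t \<le> g t * t powr (- real k0)"
      proof (intro allI impI)
        fix t :: real assume t: "0 < t \<and> t \<le> 1"
        have "1 \<le> C * (g t / t powr (real k0 + 1))" using C(2)[rule_format, of t 1] t g1 by simp
        then have "t powr (real k0 + 1) \<le> C * g t" using t by (simp add: field_simps)
        then have "t powr (real k0 + 1) * t powr (- real k0) \<le> C * g t * t powr (- real k0)"
          by (intro mult_right_mono) auto
        moreover have "t powr (real k0 + 1) * t powr (- real k0) = t"
          using t by (simp add: powr_add[symmetric])
        ultimately have "t \<le> C * (g t * t powr (- real k0))" by (simp add: mult.assoc)
        then show "(1 / C) * t \<le> g t * t powr (- real k0)" using C by (simp add: field_simps)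
      qed
      then show ?thesis unfolding ho using C by (intro disjI1 exI[of _ "1 / C"]) auto
    qed
  qed
qed


lemma quad_const:
  fixes w :: "'a::real_normed_vector \<Rightarrow> real"
  assumes K: "0 \<le> K" and b: "\<forall>x h. 0 < norm h \<and> norm h \<le> 1 \<longrightarrow> \<bar>w (x + h) - w x\<bar> \<le> K * (norm h)^2"
  shows "w y = w x"
proof -
  define d where "d = y - x"
  define \<phi> where "\<phi> t = w (x + t *\<^sub>R d)" for t
  have D: "DERIV \<phi> t :> 0" for t
  proof (cases "d = 0")
    case True
    then have "\<phi> = (\<lambda>t. w x)" by (simp add: \<phi>_def fun_eq_iff)
    then show ?thesis by simp
  next
    case False
    then have nd: "0 < norm d" by simp
    show ?thesis unfolding DERIV_def
    proof (rule Lim_null_comparison)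
      show "eventually (\<lambda>h. norm ((\<phi> (t + h) - \<phi> t) / h) \<le> K * (norm d)^2 * \<bar>h\<bar>) (at 0)"
        unfolding eventually_at
      proof (intro exI[of _ "1 / norm d"] conjI ballI impI)
        show "0 < 1 / norm d" using nd by simp
        fix h :: real assume h: "h \<noteq> 0 \<and> dist h 0 < 1 / norm d"
        have n1: "0 < norm (h *\<^sub>R d)" using h False by simp
        have n2: "norm (h *\<^sub>R d) \<le> 1" using h nd by (simp add: field_simps)
        have e: "\<phi> (t + h) - \<phi> t = w ((x + t *\<^sub>R d) + h *\<^sub>R d) - w (x + t *\<^sub>R d)"
          by (simp add: \<phi>_def scaleR_add_left add.assoc)
        have "\<bar>\<phi> (t + h) - \<phi> t\<bar> \<le> K * (norm (h *\<^sub>R d))^2"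
          unfolding e using b n1 n2 by blast
        also have "\<dots> = (K * (norm d)^2 * \<bar>h\<bar>) * \<bar>h\<bar>" by (simp add: power2_eq_square)
        finally show "norm ((\<phi> (t + h) - \<phi> t) / h) \<le> K * (norm d)^2 * \<bar>h\<bar>"
          using h by (simp add: divide_le_eq)
      qed
      show "((\<lambda>h. K * (norm d)^2 * \<bar>h\<bar>) \<longlongrightarrow> 0) (at (0::real))"
        by (rule tendsto_mult_right_zero) (intro tendsto_rabs_zero tendsto_ident_at)
    qed
  qed
  have "\<phi> 1 = \<phi> 0" using DERIV_isconst_all[of \<phi> 1 0] D by blast
  then show ?thesis by (simp add: \<phi>_def d_def)
qed

lemma pd_const_zero:
  fixes F :: "'a::euclidean_space \<Rightarrow> real"
  assumes d: "\<forall>x. (\<lambda>t. F (x + t *\<^sub>R v)) differentiable (at 0)"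
    and b: "bd F" and c: "\<forall>x. pd v F x = c"
  shows "c = 0"
proof (rule ccontr)
  assume c0: "c \<noteq> 0"
  obtain M where M: "\<forall>x. \<bar>F x\<bar> \<le> M" using b by (auto simp: bd_def)
  define \<phi> where "\<phi> t = F (0 + t *\<^sub>R v) - c * t" for t
  have "DERIV \<phi> t :> 0" for t
    using DERIV_diff[OF line_deriv[OF d, of 0 t] DERIV_cmult_Id[of c t]] c unfolding \<phi>_def by simp
  then have e: "\<phi> t = \<phi> 0" for t using DERIV_isconst_all by blast
  define t where "t = (2 * M + 1) / c"
  have "F (t *\<^sub>R v) - c * t = F 0" using e[of t] by (simp add: \<phi>_def)
  moreover have "c * t = 2 * M + 1" using c0 by (simp add: t_def)
  moreover have "\<bar>F (t *\<^sub>R v)\<bar> \<le> M" "\<bar>F 0\<bar> \<le> M" using M by auto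
  ultimately show False by linarith
qed

lemma pd_zero_const:
  fixes F :: "'a::euclidean_space \<Rightarrow> real"
  assumes d: "\<forall>v\<in>Basis. \<forall>x. (\<lambda>t. F (x + t *\<^sub>R v)) differentiable (at 0)"
    and z: "\<forall>v\<in>Basis. \<forall>x. pd v F x = 0"
  shows "F y = F x"
proof -
  have "\<bar>F (x + (y - x)) - F x\<bar> \<le> 0 * DIM('a) * norm (y - x)"
    using lip_basis[OF d, of 0 x "y - x"] z by simp
  then show ?thesis by simp
qed


lemma sup_norm_ge: "bd F \<Longrightarrow> \<bar>F y\<bar> \<le> sup_norm F"
proof -
  assume "bd F"
  then obtain M where "\<forall>x. \<bar>F x\<bar> \<le> M" unfolding bd_def by blast
  then have "bdd_above (range (\<lambda>x. \<bar>F x\<bar>))" by (auto intro: bdd_aboveI2)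
  then show ?thesis unfolding sup_norm_def by (rule cSUP_upper[OF UNIV_I])
qed

lemma degenerate:
  fixes u :: "'a::euclidean_space \<Rightarrow> real"
  assumes gp: "\<forall>t. 0 < t \<and> t \<le> 1 \<longrightarrow> 0 < g t" and g1: "g 1 = 1"
    and inc: "\<forall>\<alpha>. almost_increasing (\<lambda>r. g r / r powr \<alpha>)" and k: "holder_order g = k"
    and du: "\<forall>\<gamma> v x. set \<gamma> \<subseteq> Basis \<and> length \<gamma> < k \<and> v \<in> Basis \<longrightarrow> (\<lambda>t. Dl \<gamma> u (x + t *\<^sub>R v)) differentiable (at 0)"
    and bu: "\<forall>\<gamma>. set \<gamma> \<subseteq> Basis \<and> length \<gamma> \<le> k \<longrightarrow> bd (Dl \<gamma> u)"
    and qu: "\<forall>\<gamma>\<in>multi_indices k. bdd_above (holder_quotients k g (Dl \<gamma> u))"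
  shows "Cnorm g u \<le> (real k + 1) * sup_norm u"
proof -
  obtain c where c: "0 < c" "\<forall>r R. 0 < r \<and> r \<le> R \<and> R \<le> 1 \<longrightarrow> c * (g r / r powr (real k + 2)) \<le> g R / R powr (real k + 2)"
    using inc unfolding almost_increasing_def by blast
  have W: "g t * t powr (- real k) \<le> t^2 / c" if t: "0 < t" "t \<le> 1" for t
  proof -
    have "c * (g t / t powr (real k + 2)) \<le> 1" using c(2)[rule_format, of t 1] t g1 by simp
    then have "g t \<le> t powr (real k + 2) / c" using t c by (simp add: field_simps)
    then have "g t * t powr (- real k) \<le> t powr (real k + 2) / c * t powr (- real k)"
      by (intro mult_right_mono) auto
    also have "\<dots> = (t powr (real k + 2) * t powr (- real k)) / c" by simp
    also have "t powr (real k + 2) * t powr (- real k) = t powr 2" using t by (simp add: powr_add[symmetric])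
    also have "t powr 2 = t^2" using t by (simp add: powr_realpow)
    finally show ?thesis .
  qed
  let ?const = "\<lambda>\<gamma>. \<forall>x y. Dl \<gamma> u x = Dl \<gamma> u y"
  have Pk: "?const \<gamma>" if \<gamma>: "\<gamma> \<in> multi_indices k" for \<gamma>
  proof -
    have "wb g k (Dl \<gamma> u)" by (rule bdd_wb[OF gp]) (rule qu[rule_format, OF \<gamma>])
    then obtain K where K: "\<forall>x h. 0 < norm h \<and> norm h \<le> 1 \<longrightarrow>
      \<bar>Dl \<gamma> u (x + h) - Dl \<gamma> u x\<bar> \<le> K * (g (norm h) * norm h powr (- real k))" unfolding wb_def by blast
    have "\<forall>x h. 0 < norm h \<and> norm h \<le> 1 \<longrightarrow> \<bar>Dl \<gamma> u (x + h) - Dl \<gamma> u x\<bar> \<le> (max K 0 / c) * (norm h)^2"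
    proof (intro allI impI)
      fix x h :: 'a assume h: "0 < norm h \<and> norm h \<le> 1"
      have "\<bar>Dl \<gamma> u (x + h) - Dl \<gamma> u x\<bar> \<le> K * (g (norm h) * norm h powr (- real k))" using K h by blast
      also have "\<dots> \<le> max K 0 * (g (norm h) * norm h powr (- real k))"
      proof -
        have "0 < g (norm h)" using gp h by auto
        then show ?thesis by (intro mult_right_mono) auto
      qed
      also have "\<dots> \<le> max K 0 * ((norm h)^2 / c)" using W h by (intro mult_left_mono) auto
      finally show "\<bar>Dl \<gamma> u (x + h) - Dl \<gamma> u x\<bar> \<le> (max K 0 / c) * (norm h)^2" by simp
    qed
    then show ?thesis using quad_const[of "max K 0 / c"] c by (metis max.cobounded2 divide_nonneg_pos)
  qed
  have zero: "Dl \<gamma> u x = 0" if all: "\<forall>\<gamma>. set \<gamma> \<subseteq> Basis \<and> length \<gamma> = Suc j \<longrightarrow> ?const \<gamma>"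
    and jk: "Suc j \<le> k" and \<gamma>: "set \<gamma> \<subseteq> Basis" "length \<gamma> = Suc j" for \<gamma> j x
  proof -
    obtain v \<gamma>' where g: "\<gamma> = v # \<gamma>'" using \<gamma> by (cases \<gamma>) auto
    have v: "v \<in> Basis" and g': "set \<gamma>' \<subseteq> Basis" "length \<gamma>' = j" using \<gamma> g by auto
    have cg: "?const \<gamma>" using all \<gamma> by blast
    have "\<forall>y. pd v (Dl \<gamma>' u) y = Dl \<gamma> u 0"
    proof
      fix y
      have "pd v (Dl \<gamma>' u) y = Dl \<gamma> u y" using g by simp
      then show "pd v (Dl \<gamma>' u) y = Dl \<gamma> u 0" using cg by metis
    qed
    moreover have "\<forall>y. (\<lambda>t. Dl \<gamma>' u (y + t *\<^sub>R v)) differentiable (at 0)" using du g' v jk by auto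
    moreover have "bd (Dl \<gamma>' u)" using bu g' jk by auto
    ultimately have "Dl \<gamma> u 0 = 0" using pd_const_zero by blast
    then show ?thesis using all \<gamma> by metis
  qed
  have step: "?const \<gamma>'" if all: "\<forall>\<gamma>. set \<gamma> \<subseteq> Basis \<and> length \<gamma> = Suc j \<longrightarrow> ?const \<gamma>"
    and jk: "j < k" and \<gamma>': "set \<gamma>' \<subseteq> Basis" "length \<gamma>' = j" for \<gamma>' j
  proof -
    have "\<forall>v\<in>Basis. \<forall>x. pd v (Dl \<gamma>' u) x = 0"
    proof (intro ballI allI)
      fix v :: 'a and x assume v: "v \<in> Basis"
      have "Dl (v # \<gamma>') u x = 0" using zero[OF all, of "v # \<gamma>'" x] jk \<gamma>' v by auto
      then show "pd v (Dl \<gamma>' u) x = 0" by simp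
    qed
    moreover have "\<forall>v\<in>Basis. \<forall>x. (\<lambda>t. Dl \<gamma>' u (x + t *\<^sub>R v)) differentiable (at 0)" using du \<gamma>' jk by auto
    ultimately show ?thesis using pd_zero_const by metis
  qed
  have allc: "\<forall>\<gamma>. set \<gamma> \<subseteq> Basis \<and> length \<gamma> = k - i \<longrightarrow> ?const \<gamma>" if "i \<le> k" for i
    using that
  proof (induction i)
    case 0 then show ?case using Pk by (simp add: multi_indices_def)
  next
    case (Suc i)
    then have "k - i = Suc (k - Suc i)" "k - Suc i < k" by auto
    then show ?case using Suc step by (metis Suc_leD)
  qed
  have b1: "\<forall>j\<le>k. \<forall>\<gamma>\<in>multi_indices j. \<forall>y. \<bar>Dl \<gamma> u y\<bar> \<le> sup_norm u"
  proof (intro allI impI ballI)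
    fix j and \<gamma> :: "'a list" and y assume j: "j \<le> k" and \<gamma>: "\<gamma> \<in> multi_indices j"
    have bu0: "bd u" using bu[rule_format, of "[]"] by simp
    show "\<bar>Dl \<gamma> u y\<bar> \<le> sup_norm u"
    proof (cases j)
      case 0 then show ?thesis using \<gamma> sup_norm_ge[OF bu0] by (simp add: multi_indices_def)
    next
      case (Suc j')
      have "?const \<gamma>" using allc[of "k - j"] j \<gamma> by (auto simp: multi_indices_def)
      then have "Dl \<gamma> u y = 0" using zero[of j' \<gamma> y] allc[of "k - j"] \<gamma> j Suc by (auto simp: multi_indices_def)
      then show ?thesis using sup_norm_ge[OF bu0, of 0] by simp
    qed
  qed
  have b2: "\<forall>\<gamma>\<in>multi_indices k. \<forall>q\<in>holder_quotients k g (Dl \<gamma> u). q \<le> 0"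
  proof (intro ballI)
    fix \<gamma> :: "'a list" and q assume \<gamma>: "\<gamma> \<in> multi_indices k" and q: "q \<in> holder_quotients k g (Dl \<gamma> u)"
    then obtain x h where "q = \<bar>Dl \<gamma> u (x + h) - Dl \<gamma> u x\<bar> / (g (norm h) * norm h powr - real k)"
      unfolding holder_quotients_def by blast
    moreover have "Dl \<gamma> u (x + h) = Dl \<gamma> u x" using Pk[OF \<gamma>] by blast
    ultimately show "q \<le> 0" by simp
  qed
  show ?thesis using cnorm_upper[OF k b1 b2] by simp
qed


lemma eta_one:
  fixes \<eta> :: "'a::euclidean_space \<Rightarrow> real"
  assumes c: "cutoff \<eta>" and r: "0 < r" and y: "y \<in> ball x0 r"
  shows "eta_rx \<eta> r x0 y = 1"
proof -
  have "norm ((1/r) *\<^sub>R (y - x0)) = norm (y - x0) / r" using r by simp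
  also have "\<dots> < 1" using y r by (simp add: dist_norm norm_minus_commute)
  finally show ?thesis using c unfolding cutoff_def eta_rx_def by simp
qed

lemma localize:
  fixes u :: "'a::euclidean_space \<Rightarrow> real" and \<eta> :: "'a \<Rightarrow> real"
  assumes gp: "\<forall>t. 0 < t \<and> t \<le> 1 \<longrightarrow> 0 < g t"
    and c0: "0 < c0" and low: "\<forall>t. 0 < t \<and> t \<le> 1 \<longrightarrow> c0 * t \<le> g t * t powr (- real k)"
    and k: "holder_order g = k"
    and du: "\<forall>\<gamma> v x. set \<gamma> \<subseteq> Basis \<and> length \<gamma> < k \<and> v \<in> Basis \<longrightarrow> (\<lambda>t. Dl \<gamma> u (x + t *\<^sub>R v)) differentiable (at 0)"
    and bu: "\<forall>\<gamma>. set \<gamma> \<subseteq> Basis \<and> length \<gamma> \<le> k \<longrightarrow> bd (Dl \<gamma> u)"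
    and qu: "\<forall>\<gamma>\<in>multi_indices k. bdd_above (holder_quotients k g (Dl \<gamma> u))"
    and c: "cutoff \<eta>" and r: "0 < r"
    and hyp: "\<forall>x0. Cnorm g (\<lambda>x. u x * eta_rx \<eta> r x0 x) \<le> B"
  shows "\<forall>\<gamma> y. set \<gamma> \<subseteq> Basis \<and> length \<gamma> \<le> k \<longrightarrow> \<bar>Dl \<gamma> u y\<bar> \<le> B"
    and "\<forall>\<gamma>\<in>multi_indices k. \<forall>x h. 0 < norm h \<and> norm h < r \<and> norm h \<le> 1 \<longrightarrow>
           \<bar>Dl \<gamma> u (x + h) - Dl \<gamma> u x\<bar> / (g (norm h) * norm h powr - real k) \<le> B"
proof -
  have loc: "Dl \<gamma> (\<lambda>x. u x * eta_rx \<eta> r x0 x) y = Dl \<gamma> u y" if "y \<in> ball x0 r" for \<gamma> x0 y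
  proof -
    have "\<forall>y\<in>ball x0 r. (\<lambda>x. u x * eta_rx \<eta> r x0 x) y = u y" using eta_one[OF c r] by simp
    then show ?thesis using Dl_local[of "ball x0 r" "\<lambda>x. u x * eta_rx \<eta> r x0 x" u \<gamma>] that by simp
  qed
  have n1: "\<forall>\<gamma>. set \<gamma> \<subseteq> Basis \<and> length \<gamma> \<le> k \<longrightarrow> bd (Dl \<gamma> (\<lambda>x. u x * eta_rx \<eta> r z x))" for z
    by (rule local_nice(1)[OF gp c0 low du bu qu c r])
  have n2: "\<forall>\<gamma>\<in>multi_indices k. bdd_above (holder_quotients k g (Dl \<gamma> (\<lambda>x. u x * eta_rx \<eta> r z x)))" for z
    by (rule local_nice(2)[OF gp c0 low du bu qu c r])
  show "\<forall>\<gamma> y. set \<gamma> \<subseteq> Basis \<and> length \<gamma> \<le> k \<longrightarrow> \<bar>Dl \<gamma> u y\<bar> \<le> B"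
  proof (intro allI impI)
    fix \<gamma> :: "'a list" and y assume h: "set \<gamma> \<subseteq> Basis \<and> length \<gamma> \<le> k"
    have "\<bar>Dl \<gamma> (\<lambda>x. u x * eta_rx \<eta> r y x) y\<bar> \<le> Cnorm g (\<lambda>x. u x * eta_rx \<eta> r y x)"
      using cnorm_lower(1)[OF gp k n1 n2] h by blast
    then show "\<bar>Dl \<gamma> u y\<bar> \<le> B" using loc[of y y \<gamma>] r hyp by (metis centre_in_ball order.trans)
  qed
  show "\<forall>\<gamma>\<in>multi_indices k. \<forall>x h. 0 < norm h \<and> norm h < r \<and> norm h \<le> 1 \<longrightarrow>
           \<bar>Dl \<gamma> u (x + h) - Dl \<gamma> u x\<bar> / (g (norm h) * norm h powr - real k) \<le> B"
  proof (intro ballI allI impI)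
    fix \<gamma> :: "'a list" and x h :: 'a assume \<gamma>: "\<gamma> \<in> multi_indices k" and h: "0 < norm h \<and> norm h < r \<and> norm h \<le> 1"
    let ?F = "Dl \<gamma> (\<lambda>y. u y * eta_rx \<eta> r x y)"
    have "x \<in> ball x r" "x + h \<in> ball x r" using h r by (auto simp: dist_norm)
    then have e: "?F x = Dl \<gamma> u x" "?F (x + h) = Dl \<gamma> u (x + h)" using loc by auto
    have "\<bar>?F (x + h) - ?F x\<bar> / (g (norm h) * norm h powr - real k) \<in> holder_quotients k g ?F"
      unfolding holder_quotients_def using h by blast
    then have "\<bar>?F (x + h) - ?F x\<bar> / (g (norm h) * norm h powr - real k) \<le> Cnorm g (\<lambda>y. u y * eta_rx \<eta> r x y)"
      using cnorm_lower(2)[OF gp k n1 n2] \<gamma> by blast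
    then show "\<bar>Dl \<gamma> u (x + h) - Dl \<gamma> u x\<bar> / (g (norm h) * norm h powr - real k) \<le> B"
      using e hyp by (metis order.trans)
  qed
qed


lemma Cg_data:
  fixes u :: "'a::euclidean_space \<Rightarrow> real"
  assumes "u \<in> Cg g"
  shows "\<forall>\<gamma> v x. set \<gamma> \<subseteq> Basis \<and> length \<gamma> < holder_order g \<and> v \<in> Basis \<longrightarrow> (\<lambda>t. Dl \<gamma> u (x + t *\<^sub>R v)) differentiable (at 0)"
    and "\<forall>\<gamma>. set \<gamma> \<subseteq> Basis \<and> length \<gamma> \<le> holder_order g \<longrightarrow> bd (Dl \<gamma> u)"
    and "\<forall>\<gamma>\<in>multi_indices (holder_order g). bdd_above (holder_quotients (holder_order g) g (Dl \<gamma> u))"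
  using assms unfolding Cg_def Let_def bounded_range_bd by auto

theorem proposition4p1:
  fixes \<psi> \<phi> :: "real \<Rightarrow> real"
    and \<eta> :: "'a::euclidean_space \<Rightarrow> real"
    and S :: "(('a \<Rightarrow> real) \<times> ('a \<Rightarrow> real)) set"
  assumes "admissible_modulus \<psi>"
    and "admissible_order_function \<phi>"
    and "cutoff \<eta>"
    and "index_interval \<psi> \<subseteq> {0<..<1}"
    and "index_interval (\<lambda>r. \<phi> r * \<psi> r) \<subseteq> {0<..<1} \<union> {1<..<2} \<union> {2<..<3}"
    and "\<forall>(u, f)\<in>S. u \<in> Cg (\<lambda>r. \<phi> r * \<psi> r) \<and> f \<in> Cg \<psi>"
    and "\<forall>\<epsilon>>0. \<exists>r>0. \<exists>c1\<ge>1. \<forall>(u, f)\<in>S. \<forall>x0.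
           Cnorm (\<lambda>r. \<phi> r * \<psi> r) (\<lambda>x. u x * eta_rx \<eta> r x0 x)
             \<le> c1 * (Cnorm \<psi> f + sup_norm u) + \<epsilon> * Cnorm (\<lambda>r. \<phi> r * \<psi> r) u"
  shows "\<exists>C. \<forall>(u, f)\<in>S. Cnorm (\<lambda>r. \<phi> r * \<psi> r) u \<le> C * (Cnorm \<psi> f + sup_norm u)"
proof -
  define g where "g = (\<lambda>r. \<phi> r * \<psi> r)"
  have A5: "index_interval g \<subseteq> {0<..<1} \<union> {1<..<2} \<union> {2<..<3}" unfolding g_def by (rule assms(5))
  have A6: "\<forall>(u, f)\<in>S. u \<in> Cg g \<and> f \<in> Cg \<psi>" unfolding g_def by (rule assms(6))
  have A7: "\<forall>\<epsilon>>0. \<exists>r>0. \<exists>c1\<ge>1. \<forall>(u, f)\<in>S. \<forall>x0.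
           Cnorm g (\<lambda>x. u x * eta_rx \<eta> r x0 x) \<le> c1 * (Cnorm \<psi> f + sup_norm u) + \<epsilon> * Cnorm g u"
    unfolding g_def by (rule assms(7))
  have \<psi>p: "\<forall>t. 0 < t \<and> t \<le> 1 \<longrightarrow> 0 < \<psi> t" and \<psi>1: "\<psi> 1 = 1" and \<psi>lim: "(\<psi> \<longlongrightarrow> 0) (at_right 0)"
    using assms(1) unfolding admissible_modulus_def by auto
  have \<phi>p: "\<forall>t>0. 0 < \<phi> t" and \<phi>1: "\<phi> 1 = 1" using assms(2) unfolding admissible_order_function_def by auto
  obtain \<delta>1 a1 where a1: "0 < a1" "0 < \<delta>1" and sc: "\<forall>s r. 1 \<le> s \<and> 0 < r \<longrightarrow> a1 * s powr (2*\<delta>1) * \<phi> r \<le> \<phi> (s * r)"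
    using assms(2) unfolding admissible_order_function_def by blast
  have gp: "\<forall>t. 0 < t \<and> t \<le> 1 \<longrightarrow> 0 < g t" using \<psi>p \<phi>p by (simp add: g_def)
  have g1: "g 1 = 1" using \<psi>1 \<phi>1 by (simp add: g_def)
  have \<phi>bd: "a1 * \<phi> t \<le> 1" if t: "0 < t" "t \<le> 1" for t
  proof -
    have "1 \<le> 1 / t" using t by simp
    then have "1 \<le> (1 / t) powr (2 * \<delta>1)" using a1 by (intro ge_one_powr_ge_zero) auto
    then have "a1 * \<phi> t \<le> a1 * (1 / t) powr (2 * \<delta>1) * \<phi> t"
      using a1 \<phi>p t by (simp add: mult_le_cancel_right1 mult.commute mult.left_commute)
    also have "\<dots> \<le> \<phi> ((1 / t) * t)" using sc \<open>1 \<le> 1 / t\<close> t by blast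
    also have "\<dots> = 1" using t \<phi>1 by simp
    finally show ?thesis .
  qed
  have nb: "\<not> (\<exists>c>0. \<forall>t. 0 < t \<and> t \<le> 1 \<longrightarrow> c \<le> g t)"
  proof
    assume "\<exists>c>0. \<forall>t. 0 < t \<and> t \<le> 1 \<longrightarrow> c \<le> g t"
    then obtain c where c: "0 < c" "\<forall>t. 0 < t \<and> t \<le> 1 \<longrightarrow> c \<le> g t" by blast
    have low: "c * a1 \<le> \<psi> t" if t: "0 < t" "t \<le> 1" for t
    proof -
      have "c \<le> \<phi> t * \<psi> t" using c t by (simp add: g_def)
      then have "c * a1 \<le> (a1 * \<phi> t) * \<psi> t" using a1 by (simp add: mult_ac)
      also have "\<dots> \<le> 1 * \<psi> t" using \<phi>bd[OF t] \<psi>p t by (intro mult_right_mono) auto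
      finally show ?thesis by simp
    qed
    have "eventually (\<lambda>t. \<psi> t < c * a1) (at_right 0)"
      using order_tendstoD(2)[OF \<psi>lim] c a1 by simp
    moreover have "eventually (\<lambda>t::real. 0 < t \<and> t < 1) (at_right 0)"
      unfolding eventually_at_right_field by (intro exI[of _ 1]) auto
    ultimately have "eventually (\<lambda>t::real. False) (at_right 0)"
      by eventually_elim (use low in force)
    then show False by simp
  qed
  have gpsi: "\<forall>t. 0 < t \<and> t \<le> 1 \<longrightarrow> 0 < \<psi> t" by (rule \<psi>p)
  define k where "k = holder_order g"
  have kk: "holder_order g = k" by (simp add: k_def)
  have fpos: "0 \<le> Cnorm \<psi> f" if "f \<in> Cg \<psi>" for f :: "'a \<Rightarrow> real"
    using cnorm_lower(3)[OF gpsi refl Cg_data(2,3)[OF that]] .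
  have Apos: "sup_norm u \<le> Cnorm \<psi> f + sup_norm u" "0 \<le> sup_norm u" if "(u, f) \<in> S" for u f
  proof -
    have "u \<in> Cg g" using A6 that by auto
    then have "bd (Dl [] u)" using Cg_data(2)[of u g] by (metis empty_subsetI list.set(1) list.size(3) zero_le)
    then have "bd u" by simp
    then show "0 \<le> sup_norm u" using sup_norm_ge[of u 0] by linarith
    show "sup_norm u \<le> Cnorm \<psi> f + sup_norm u" using fpos A6 that by auto
  qed
  note ic = index_cases[OF gp g1 A5 nb]
  show ?thesis
  proof (cases "\<forall>\<alpha>. almost_increasing (\<lambda>r. g r / r powr \<alpha>)")
    case True
    have "\<forall>(u, f)\<in>S. Cnorm g u \<le> (real k + 1) * (Cnorm \<psi> f + sup_norm u)"
    proof (clarify)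
      fix u f assume uf: "(u, f) \<in> S"
      then have uC: "u \<in> Cg g" using A6 by auto
      have "Cnorm g u \<le> (real k + 1) * sup_norm u"
        using degenerate[OF gp g1 True kk] Cg_data[OF uC] unfolding kk by blast
      also have "\<dots> \<le> (real k + 1) * (Cnorm \<psi> f + sup_norm u)"
        using Apos[OF uf] by (intro mult_left_mono) auto
      finally show "Cnorm g u \<le> (real k + 1) * (Cnorm \<psi> f + sup_norm u)" .
    qed
    then show ?thesis unfolding g_def by blast
  next
    case False
    then obtain c0 where c0: "0 < c0" and low: "\<forall>t. 0 < t \<and> t \<le> 1 \<longrightarrow> c0 * t \<le> g t * t powr (- real k)"
      using ic unfolding kk by blast
    define \<epsilon>1 where "\<epsilon>1 = 1 / (4 * (real k + 2))"
    have e1: "0 < \<epsilon>1" by (simp add: \<epsilon>1_def)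
    obtain r1 c1 where r1: "0 < r1" and c1: "1 \<le> c1" and H1: "\<forall>(u, f)\<in>S. \<forall>x0.
           Cnorm g (\<lambda>x. u x * eta_rx \<eta> r1 x0 x) \<le> c1 * (Cnorm \<psi> f + sup_norm u) + \<epsilon>1 * Cnorm g u"
      using A7 e1 by blast
    define \<epsilon>2 where "\<epsilon>2 = c0 * r1 / 8"
    have e2: "0 < \<epsilon>2" using c0 r1 by (simp add: \<epsilon>2_def)
    obtain r2 c2 where r2: "0 < r2" and c2: "1 \<le> c2" and H2: "\<forall>(u, f)\<in>S. \<forall>x0.
           Cnorm g (\<lambda>x. u x * eta_rx \<eta> r2 x0 x) \<le> c2 * (Cnorm \<psi> f + sup_norm u) + \<epsilon>2 * Cnorm g u"
      using A7 e2 by blast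
    define X where "X = (real k + 2) * c1 + 2 * c2 / (c0 * r1)"
    have "\<forall>(u, f)\<in>S. Cnorm g u \<le> (2 * X) * (Cnorm \<psi> f + sup_norm u)"
    proof (clarify)
      fix u f assume uf: "(u, f) \<in> S"
      then have uC: "u \<in> Cg g" using A6 by auto
      note ud = Cg_data[OF uC, unfolded kk]
      define A where "A = Cnorm \<psi> f + sup_norm u"
      define N where "N = Cnorm g u"
      have A0: "0 \<le> A" using Apos[OF uf] unfolding A_def by linarith
      have N0: "0 \<le> N" unfolding N_def using cnorm_lower(3)[OF gp kk ud(2,3)] .
      define B1 where "B1 = c1 * A + \<epsilon>1 * N"
      define B2 where "B2 = c2 * A + \<epsilon>2 * N"
      have B10: "0 \<le> B1" unfolding B1_def using A0 N0 c1 e1 by simp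
      have B20: "0 \<le> B2" unfolding B2_def using A0 N0 c2 e2 by simp
      have h1: "\<forall>x0. Cnorm g (\<lambda>x. u x * eta_rx \<eta> r1 x0 x) \<le> B1"
        using H1 uf unfolding B1_def A_def N_def by auto
      have h2: "\<forall>x0. Cnorm g (\<lambda>x. u x * eta_rx \<eta> r2 x0 x) \<le> B2"
        using H2 uf unfolding B2_def A_def N_def by auto
      note L1 = localize[OF gp c0 low kk ud(1,2,3) assms(3) r1 h1]
      note L2 = localize[OF gp c0 low kk ud(1,2,3) assms(3) r2 h2]
      have bound1: "\<forall>j\<le>k. \<forall>\<gamma>\<in>multi_indices j. \<forall>y. \<bar>Dl \<gamma> u y\<bar> \<le> B1"
        using L1(1) by (auto simp: multi_indices_def)
      have bound2: "\<forall>\<gamma>\<in>multi_indices k. \<forall>q\<in>holder_quotients k g (Dl \<gamma> u). q \<le> B1 + 2 * B2 / (c0 * r1)"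
      proof (intro ballI)
        fix \<gamma> :: "'a list" and q assume \<gamma>: "\<gamma> \<in> multi_indices k" and q: "q \<in> holder_quotients k g (Dl \<gamma> u)"
        then obtain x h where qd: "q = \<bar>Dl \<gamma> u (x + h) - Dl \<gamma> u x\<bar> / (g (norm h) * norm h powr - real k)"
          and h: "0 < norm h" "norm h \<le> 1"
          unfolding holder_quotients_def by blast
        have B12: "0 \<le> 2 * B2 / (c0 * r1)" using B20 c0 r1 by simp
        show "q \<le> B1 + 2 * B2 / (c0 * r1)"
        proof (cases "norm h < r1")
          case True
          then have "q \<le> B1" using L1(2) \<gamma> h unfolding qd by blast
          then show ?thesis using B12 by linarith
        next
          case False
          have "\<gamma> \<in> multi_indices k" by (rule \<gamma>)
          then have gl: "set \<gamma> \<subseteq> Basis \<and> length \<gamma> \<le> k" by (simp add: multi_indices_def)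
          have num: "\<bar>Dl \<gamma> u (x + h) - Dl \<gamma> u x\<bar> \<le> 2 * B2"
          proof -
            have "\<bar>Dl \<gamma> u (x + h)\<bar> \<le> B2" "\<bar>Dl \<gamma> u x\<bar> \<le> B2" using L2(1) gl by blast+
            then show ?thesis by linarith
          qed
          have W: "c0 * r1 \<le> g (norm h) * norm h powr - real k"
          proof -
            have "c0 * r1 \<le> c0 * norm h" using False c0 by simp
            also have "\<dots> \<le> g (norm h) * norm h powr - real k" using low h by auto
            finally show ?thesis .
          qed
          have W0: "0 < c0 * r1" using c0 r1 by simp
          have "q \<le> 2 * B2 / (g (norm h) * norm h powr - real k)"
            unfolding qd using num W W0 by (intro divide_right_mono) auto
          also have "\<dots> \<le> 2 * B2 / (c0 * r1)"
            using W W0 B20 by (intro divide_left_mono) auto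
          finally show ?thesis using B10 by linarith
        qed
      qed
      have "N \<le> (real k + 1) * B1 + (B1 + 2 * B2 / (c0 * r1))"
        unfolding N_def by (rule cnorm_upper[OF kk bound1 bound2])
      also have "\<dots> = X * A + ((real k + 2) * \<epsilon>1) * N + (2 * \<epsilon>2 / (c0 * r1)) * N"
        unfolding B1_def B2_def X_def using c0 r1 by (simp add: field_simps)
      also have "(real k + 2) * \<epsilon>1 = 1 / 4" unfolding \<epsilon>1_def by simp
      also have "2 * \<epsilon>2 / (c0 * r1) = 1 / 4" unfolding \<epsilon>2_def using c0 r1 by simp
      finally have "N \<le> X * A + N / 2" by simp
      then show "Cnorm g u \<le> (2 * X) * (Cnorm \<psi> f + sup_norm u)" unfolding N_def A_def by simp
    qed
    then show ?thesis unfolding g_def by blast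
  qed
qed

end
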